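(* Let $P$ be the Petersen graph and $\mathcal{N}P$ its normal graph algebra over a field $\mathbb{F}$ of characteristic not $2$, with sets $\mathcal{F}_1,\dots,\mathcal{F}_6$ as defined in the context. Every automorphism of $\mathcal{N}P$ permutes the six sets $\mathcal{F}_1,\dots,\mathcal{F}_6$, and the resulting homomorphism from $\mathrm{aut}\,\mathcal{N}P$ to the symmetric group on $\{\mathcal{F}_1,\dots,\mathcal{F}_6\}$ is surjective with kernel the group $\mathbb{F}^{\#}_P$ of scalar automorphisms. Thus $\mathrm{aut}\,\mathcal{N}P/\mathbb{F}^{\#}_P\cong\mathrm{Sym}(6)$, acting on $\{\mathcal{F}_1,\dots,\mathcal{F}_6\}$.
   Context: The Petersen graph $P$ has as vertices the 2-element subsets $\{i,j\}$ of $\{1,\dots,5\}$, two vertices adjacent iff disjoint. $\mathcal{N}P=U_P\oplus\mathfrak{Z}_P$ with $U_P$ having basis the vertices and $\mathfrak{Z}_P$ basis the edges, commutative bilinear product determined by: for distinct vertices $x,y$, $xy$ is the edge joining them if adjacent and $0$ otherwise; $x^2$ is the sum of the three edges at $x$; products involving $\mathfrak{Z}_P$ are $0$. For $1\le i\le5$, $u_i=\frac12\left(\sum_{i\notin A}A-\sum_{i\in A}A\right)$, sums over vertices $A$. For distinct $i,j\in\{1,\dots,6\}$, $\mathbf{ij}$ denotes the vertex $\{i,j\}$ if $i,j\le5$ and $u_i$ if $j=6$ (symmetrically). $\mathcal{F}_i=\{\langle\mathbf{ij}\rangle: j\ne i\}$ for $1\le i\le6$. An automorphism of $\mathcal{N}P$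 is a product-preserving linear bijection mapping $U_P$ onto $U_P$ and $\mathfrak{Z}_P$ onto $\mathfrak{Z}_P$; $\mathrm{aut}\,\mathcal{N}P$ is the group of these; a scalar automorphism is $u\mapsto\alpha u$ on $U_P$, $\mathfrak{z}\mapsto\alpha^2\mathfrak{z}$ on $\mathfrak{Z}_P$, for some $\alpha\neq0$. *)

theory Defs
  imports "HOL-Algebra.Bij" "HOL-Algebra.Coset"
begin

typedef pvert = "{A::nat set. A \<subseteq> {1..5} \<and> card A = 2}"
  by (rule exI[of _ "{1,2}"]) auto

typedef pedge = "{S::pvert set. \<exists>A B. S = {A, B} \<and> Rep_pvert A \<inter> Rep_pvert B = {}}"
proof -
  have a: "Rep_pvert (Abs_pvert {1,2}) = {1,2}" by (rule Abs_pvert_inverse) auto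
  have b: "Rep_pvert (Abs_pvert {3,4}) = {3,4}" by (rule Abs_pvert_inverse) auto
  show ?thesis
  proof
    show "{Abs_pvert {1,2}, Abs_pvert {3,4}} \<in> {S. \<exists>A B. S = {A, B} \<and> Rep_pvert A \<inter> Rep_pvert B = {}}"
      using a b by (intro CollectI exI[of _ "Abs_pvert {1,2}"] exI[of _ "Abs_pvert {3,4}"]) simp
  qed
qed

text \<open>U_P = functions on vertices (coordinates w.r.t. the vertex basis),
  Z_P = functions on edges (coordinates w.r.t. the edge basis).\<close>
type_synonym 'a np = "(pvert \<Rightarrow> 'a) \<times> (pedge \<Rightarrow> 'a)"

definition np_add :: "'a::field np \<Rightarrow> 'a np \<Rightarrow> 'a np" where
  "np_add x y = (\<lambda>A. fst x A + fst y A, \<lambda>e. snd x e + snd y e)"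

definition np_scale :: "'a::field \<Rightarrow> 'a np \<Rightarrow> 'a np" where
  "np_scale c x = (\<lambda>A. c * fst x A, \<lambda>e. c * snd x e)"

text \<open>Bilinear extension of: x y = edge xy if adjacent, 0 otherwise (x \<noteq> y);
  x^2 = sum of the three edges at x; products with Z_P vanish.\<close>
definition np_mult :: "'a::field np \<Rightarrow> 'a np \<Rightarrow> 'a np" where
  "np_mult x y = (\<lambda>_. 0,
     \<lambda>e. (\<Sum>A\<in>Rep_pedge e. fst x A) * (\<Sum>B\<in>Rep_pedge e. fst y B))"

definition U_P :: "'a::field np set" where
  "U_P = {x. snd x = (\<lambda>_. 0)}"

definition Z_P :: "'a::field np set" where
  "Z_P = {x. fst x = (\<lambda>_. 0)}"

definition autNP :: "('a::field np \<Rightarrow> 'a np) set" where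
  "autNP = {\<phi>. bij \<phi>
      \<and> (\<forall>x y. \<phi> (np_add x y) = np_add (\<phi> x) (\<phi> y))
      \<and> (\<forall>c x. \<phi> (np_scale c x) = np_scale c (\<phi> x))
      \<and> \<phi> ` U_P = U_P \<and> \<phi> ` Z_P = Z_P
      \<and> (\<forall>x y. \<phi> (np_mult x y) = np_mult (\<phi> x) (\<phi> y))}"

definition AutNP :: "('a::field np \<Rightarrow> 'a np) monoid" where
  "AutNP = \<lparr>carrier = autNP, mult = (\<circ>), one = id\<rparr>"

definition scalar_aut :: "'a::field \<Rightarrow> 'a np \<Rightarrow> 'a np" where
  "scalar_aut \<alpha> x = (\<lambda>A. \<alpha> * fst x A, \<lambda>e. \<alpha>^2 * snd x e)"

definition scalar_auts :: "('a::field np \<Rightarrow> 'a np) set" where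
  "scalar_auts = {scalar_aut \<alpha> | \<alpha>. \<alpha> \<noteq> 0}"

definition vtx :: "pvert \<Rightarrow> 'a::field np" where
  "vtx A = (\<lambda>B. if B = A then 1 else 0, \<lambda>_. 0)"

definition u_el :: "nat \<Rightarrow> 'a::field np" where
  "u_el i = (\<lambda>A. if i \<in> Rep_pvert A then - (1/2) else 1/2, \<lambda>_. 0)"

definition bold :: "nat \<Rightarrow> nat \<Rightarrow> 'a::field np" where
  "bold i j = (if i \<le> 5 \<and> j \<le> 5 then vtx (Abs_pvert {i, j})
               else if j = 6 then u_el i else u_el j)"

definition span1 :: "'a::field np \<Rightarrow> 'a np set" where
  "span1 x = {np_scale c x | c. True}"

definition FF :: "nat \<Rightarrow> 'a::field np set set" where
  "FF i = {span1 (bold i j) | j. j \<in> {1..6} \<and> j \<noteq> i}"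

definition FFs :: "'a::field np set set set" where
  "FFs = FF ` {1..6}"

definition lines_img :: "('a np \<Rightarrow> 'a np) \<Rightarrow> 'a np set set \<Rightarrow> 'a np set set" where
  "lines_img \<phi> S = (\<lambda>L. \<phi> ` L) ` S"

definition rhoF :: "('a::field np \<Rightarrow> 'a np) \<Rightarrow> 'a np set set \<Rightarrow> 'a np set set" where
  "rhoF \<phi> = restrict (lines_img \<phi>) FFs"

end

theory Submission
  imports Defs "HOL-Combinatorics.Permutations"
begin

definition V :: "nat \<Rightarrow> nat \<Rightarrow> pvert" where "V i j = Abs_pvert {i,j}"
definition E :: "pvert \<Rightarrow> pvert \<Rightarrow> pedge" where "E A B = Abs_pedge {A,B}"

lemma Rep_pvert_sub: "Rep_pvert A \<subseteq> {1..5}" and Rep_pvert_card: "card (Rep_pvert A) = 2"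
  using Rep_pvert[of A] by auto

lemma Rep_pvert_two: "\<exists>i j. i \<noteq> j \<and> i \<in> {1..5} \<and> j \<in> {1..5} \<and> Rep_pvert A = {i,j}"
proof -
  obtain i j where "i \<noteq> j" "Rep_pvert A = {i,j}" using Rep_pvert_card[of A] card_2_iff by metis
  thus ?thesis using Rep_pvert_sub[of A] by auto
qed

lemma RepV: "i \<noteq> j \<Longrightarrow> i \<in> {1..5} \<Longrightarrow> j \<in> {1..5} \<Longrightarrow> Rep_pvert (V i j) = {i,j}"
  unfolding V_def by (rule Abs_pvert_inverse) auto

lemma pvert_V: "\<exists>i j. i \<noteq> j \<and> i \<in> {1..5} \<and> j \<in> {1..5} \<and> A = V i j"
  using Rep_pvert_two[of A] unfolding V_def by (metis Rep_pvert_inverse)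

lemma V_sym: "V i j = V j i" unfolding V_def by (simp add: insert_commute)

lemma V_eq: "i \<noteq> j \<Longrightarrow> i \<in> {1..5} \<Longrightarrow> j \<in> {1..5} \<Longrightarrow> k \<noteq> l \<Longrightarrow> k \<in> {1..5} \<Longrightarrow> l \<in> {1..5}
   \<Longrightarrow> (V i j = V k l) = ({i,j} = {k,l})"
  by (metis RepV V_def)

lemma Rep_pedge_ex: "\<exists>A B. Rep_pedge e = {A,B} \<and> Rep_pvert A \<inter> Rep_pvert B = {}"
  using Rep_pedge[of e] by auto

lemma disj_neq: "Rep_pvert A \<inter> Rep_pvert B = {} \<Longrightarrow> A \<noteq> B"
  using Rep_pvert_card[of A] by auto

lemma RepE: "Rep_pvert A \<inter> Rep_pvert B = {} \<Longrightarrow> Rep_pedge (E A B) = {A,B}"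
  unfolding E_def by (rule Abs_pedge_inverse) auto

lemma pedge_E: "\<exists>A B. Rep_pvert A \<inter> Rep_pvert B = {} \<and> e = E A B"
  using Rep_pedge_ex[of e] unfolding E_def by (metis Rep_pedge_inverse)

lemma E_sym: "E A B = E B A" unfolding E_def by (simp add: insert_commute)

lemma E_eq: "Rep_pvert A \<inter> Rep_pvert B = {} \<Longrightarrow> Rep_pvert C \<inter> Rep_pvert D = {} \<Longrightarrow>
   (E A B = E C D) = ({A,B} = {C,D})"
  by (metis RepE E_def)

lemma finite_pvert[simp]: "finite (UNIV :: pvert set)"
proof -
  have "UNIV = Abs_pvert ` {A. A \<subseteq> {1..5} \<and> card A = 2}"
    using type_definition.Abs_image[OF type_definition_pvert] by simp
  moreover have "finite {A::nat set. A \<subseteq> {1..5} \<and> card A = 2}"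
    by (rule finite_subset[of _ "Pow {1..5}"]) auto
  ultimately show ?thesis by (metis finite_imageI)
qed

lemma finite_pedge[simp]: "finite (UNIV :: pedge set)"
proof -
  have eq: "UNIV = Abs_pedge ` {S. \<exists>A B. S = {A, B} \<and> Rep_pvert A \<inter> Rep_pvert B = {}}"
    using type_definition.Abs_image[OF type_definition_pedge] by simp
  have fin: "finite {S::pvert set. \<exists>A B. S = {A, B} \<and> Rep_pvert A \<inter> Rep_pvert B = {}}"
  proof (rule finite_subset)
    show "finite (UNIV :: pvert set set)" using finite_Pow_iff[THEN iffD2, OF finite_pvert] by simp
  qed simp
  show ?thesis by (subst eq) (rule finite_imageI[OF fin])
qed

definition sv :: "(pvert \<Rightarrow> 'a::field) \<Rightarrow> pedge \<Rightarrow> 'a" where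
  "sv v e = (\<Sum>A\<in>Rep_pedge e. v A)"

lemma sv_E: "Rep_pvert A \<inter> Rep_pvert B = {} \<Longrightarrow> sv v (E A B) = v A + v B"
  unfolding sv_def using RepE disj_neq by auto

lemma np_mult_sv: "np_mult x y = (\<lambda>_. 0, \<lambda>e. sv (fst x) e * sv (fst y) e)"
  unfolding np_mult_def sv_def by simp

definition npz :: "'a::field np" where "npz = (\<lambda>_. 0, \<lambda>_. 0)"

lemma np_scale_0: "np_scale 0 x = npz" unfolding np_scale_def npz_def by simp

definition linmap :: "('a::field np \<Rightarrow> 'a np) \<Rightarrow> bool" where
  "linmap \<phi> \<longleftrightarrow> (\<forall>x y. \<phi> (np_add x y) = np_add (\<phi> x) (\<phi> y)) \<and> (\<forall>c x. \<phi> (np_scale c x) = np_scale c (\<phi> x))"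

lemma autD: "\<phi> \<in> autNP \<Longrightarrow> bij \<phi>
      \<and> (\<forall>x y. \<phi> (np_add x y) = np_add (\<phi> x) (\<phi> y))
      \<and> (\<forall>c x. \<phi> (np_scale c x) = np_scale c (\<phi> x))
      \<and> \<phi> ` U_P = U_P \<and> \<phi> ` Z_P = Z_P
      \<and> (\<forall>x y. \<phi> (np_mult x y) = np_mult (\<phi> x) (\<phi> y))"
  unfolding autNP_def mem_Collect_eq by assumption

lemma aut_lin: "\<phi> \<in> autNP \<Longrightarrow> linmap \<phi>" unfolding linmap_def using autD[THEN conjunct2, THEN conjunct1] autD[THEN conjunct2, THEN conjunct2, THEN conjunct1] by (intro conjI)

lemma lin_zero: "linmap \<phi> \<Longrightarrow> \<phi> npz = npz"
  unfolding linmap_def by (metis np_scale_0)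

lemma aut_bij: "\<phi> \<in> autNP \<Longrightarrow> bij \<phi>" using autD[THEN conjunct1] .
lemma aut_mult: "\<phi> \<in> autNP \<Longrightarrow> \<phi> (np_mult x y) = np_mult (\<phi> x) (\<phi> y)" using autD[THEN conjunct2, THEN conjunct2, THEN conjunct2, THEN conjunct2, THEN conjunct2, rule_format] .
lemma aut_U: "\<phi> \<in> autNP \<Longrightarrow> \<phi> ` U_P = U_P" using autD[THEN conjunct2, THEN conjunct2, THEN conjunct2, THEN conjunct1] .
lemma aut_Z: "\<phi> \<in> autNP \<Longrightarrow> \<phi> ` Z_P = Z_P" using autD[THEN conjunct2, THEN conjunct2, THEN conjunct2, THEN conjunct2, THEN conjunct1] .
lemma aut_add: "\<phi> \<in> autNP \<Longrightarrow> \<phi> (np_add x y) = np_add (\<phi> x) (\<phi> y)" using autD[THEN conjunct2, THEN conjunct1, rule_format] .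
lemma aut_scale: "\<phi> \<in> autNP \<Longrightarrow> \<phi> (np_scale c x) = np_scale c (\<phi> x)" using autD[THEN conjunct2, THEN conjunct2, THEN conjunct1, rule_format] .

lemma autI: "bij \<phi> \<Longrightarrow> (\<And>x y. \<phi> (np_add x y) = np_add (\<phi> x) (\<phi> y))
      \<Longrightarrow> (\<And>c x. \<phi> (np_scale c x) = np_scale c (\<phi> x))
      \<Longrightarrow> \<phi> ` U_P = U_P \<Longrightarrow> \<phi> ` Z_P = Z_P
      \<Longrightarrow> (\<And>x y. \<phi> (np_mult x y) = np_mult (\<phi> x) (\<phi> y)) \<Longrightarrow> \<phi> \<in> autNP"
  unfolding autNP_def mem_Collect_eq by blast

lemma aut_zero: "\<phi> \<in> autNP \<Longrightarrow> \<phi> npz = npz" using aut_lin lin_zero by blast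

lemma aut_inj_eq: "\<phi> \<in> autNP \<Longrightarrow> (\<phi> x = \<phi> y) = (x = y)"
  using aut_bij bij_is_inj inj_eq by metis

lemma aut_nz: "\<phi> \<in> autNP \<Longrightarrow> (\<phi> x = npz) = (x = npz)"
  using aut_inj_eq aut_zero by metis

lemma aut_comp: assumes "\<phi> \<in> autNP" "\<psi> \<in> autNP" shows "\<phi> \<circ> \<psi> \<in> autNP"
proof (rule autI)
  show "bij (\<phi> \<circ> \<psi>)" using assms aut_bij bij_comp by blast
  have "(\<phi> \<circ> \<psi>) ` U_P = \<phi> ` (\<psi> ` U_P)" by (rule image_comp[symmetric])
  thus "(\<phi> \<circ> \<psi>) ` U_P = U_P" using assms by (simp only: aut_U)
  have "(\<phi> \<circ> \<psi>) ` Z_P = \<phi> ` (\<psi> ` Z_P)" by (rule image_comp[symmetric])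
  thus "(\<phi> \<circ> \<psi>) ` Z_P = Z_P" using assms by (simp only: aut_Z)
qed (simp_all add: assms aut_add aut_scale aut_mult)

lemma aut_id: "id \<in> autNP" by (rule autI) auto

lemma aut_inv: assumes "\<phi> \<in> autNP" shows "inv_into UNIV \<phi> \<in> autNP"
proof -
  have b: "bij \<phi>" using assms aut_bij by blast
  have r: "\<And>y. \<phi> (inv_into UNIV \<phi> y) = y" using b by (simp add: bij_is_surj surj_f_inv_f)
  have l: "\<And>y. inv_into UNIV \<phi> (\<phi> y) = y" using b by (simp add: bij_is_inj)
  have "bij (inv_into UNIV \<phi>)" using b by (simp add: bij_imp_bij_inv)
  moreover have "inv_into UNIV \<phi> (np_add x y) = np_add (inv_into UNIV \<phi> x) (inv_into UNIV \<phi> y)" for x y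
    by (metis l r aut_add[OF assms])
  moreover have "inv_into UNIV \<phi> (np_scale c x) = np_scale c (inv_into UNIV \<phi> x)" for c x
    by (metis l r aut_scale[OF assms])
  moreover have "inv_into UNIV \<phi> (np_mult x y) = np_mult (inv_into UNIV \<phi> x) (inv_into UNIV \<phi> y)" for x y
    by (metis l r aut_mult[OF assms])
  moreover have "inv_into UNIV \<phi> ` U_P = U_P" using aut_U[OF assms] b by (metis bij_is_inj image_inv_f_f)
  moreover have "inv_into UNIV \<phi> ` Z_P = Z_P" using aut_Z[OF assms] b by (metis bij_is_inj image_inv_f_f)
  ultimately show ?thesis by (intro autI) auto
qed

lemma aut_inv_l: "\<phi> \<in> autNP \<Longrightarrow> inv_into UNIV \<phi> (\<phi> y) = y" using aut_bij[of \<phi>] bij_is_inj inv_f_f by metis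
lemma aut_inv_r: "\<phi> \<in> autNP \<Longrightarrow> \<phi> (inv_into UNIV \<phi> y) = y" using aut_bij by (metis bij_is_surj surj_f_inv_f)

lemma aut_inU: "\<phi> \<in> autNP \<Longrightarrow> x \<in> U_P \<Longrightarrow> \<phi> x \<in> U_P" using aut_U by blast

lemma mkaut:
  fixes \<psi> :: "(pvert \<Rightarrow> 'a::field) \<Rightarrow> (pvert \<Rightarrow> 'a)" and \<pi> :: "pedge \<Rightarrow> pedge"
  assumes add: "\<And>v w. \<psi> (\<lambda>A. v A + w A) = (\<lambda>A. \<psi> v A + \<psi> w A)"
    and hom: "\<And>c v. \<psi> (\<lambda>A. c * v A) = (\<lambda>A. c * \<psi> v A)"
    and invol: "\<And>v. \<psi> (\<psi> v) = v" and pinv: "\<And>e. \<pi> (\<pi> e) = e"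
    and svr: "\<And>v e. sv (\<psi> v) e = sv v (\<pi> e)"
  shows "(\<lambda>x. (\<psi> (fst x), snd x \<circ> \<pi>)) \<in> autNP"
proof -
  let ?F = "\<lambda>x::'a np. (\<psi> (fst x), snd x \<circ> \<pi>)"
  have z: "\<psi> (\<lambda>_. 0) = (\<lambda>_. 0)" using hom[of 0] by simp
  have ff: "?F (?F x) = x" for x by (cases x) (simp add: o_def invol pinv)
  have fid: "?F \<circ> ?F = id" by (rule ext) (simp only: o_apply ff id_apply)
  have "bij ?F" by (rule o_bij[where g = ?F]) (rule fid)+
  moreover have "?F (np_add x y) = np_add (?F x) (?F y)" for x y
    unfolding np_add_def using add by (simp add: o_def)
  moreover have "?F (np_scale c x) = np_scale c (?F x)" for c x
    unfolding np_scale_def using hom by (simp add: o_def)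
  moreover have "?F (np_mult x y) = np_mult (?F x) (?F y)" for x y
    unfolding np_mult_sv using z svr by (simp add: o_def)
  moreover have "?F ` U_P = U_P"
  proof
    show "?F ` U_P \<subseteq> U_P" unfolding U_P_def by (auto simp: o_def)
    show "U_P \<subseteq> ?F ` U_P"
    proof
      fix x assume "x \<in> (U_P :: 'a np set)"
      hence "?F x \<in> U_P" unfolding U_P_def by (auto simp: o_def)
      then show "x \<in> ?F ` U_P" using ff[of x] by (intro image_eqI[OF sym])
    qed
  qed
  moreover have "?F ` Z_P = Z_P"
  proof
    show "?F ` Z_P \<subseteq> Z_P" unfolding Z_P_def using z by auto
    show "Z_P \<subseteq> ?F ` Z_P"
    proof
      fix x assume "x \<in> (Z_P :: 'a np set)"
      hence "?F x \<in> Z_P" unfolding Z_P_def using z by auto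
      then show "x \<in> ?F ` Z_P" using ff[of x] by (intro image_eqI[OF sym])
    qed
  qed
  ultimately show ?thesis by (intro autI) auto
qed

lemma scalar_aut_in:
  fixes \<alpha> :: "'a::field" assumes "\<alpha> \<noteq> 0" shows "scalar_aut \<alpha> \<in> autNP"
proof -
  have ff: "scalar_aut (inverse \<alpha>) (scalar_aut \<alpha> x) = x" "scalar_aut \<alpha> (scalar_aut (inverse \<alpha>) x) = x" for x
    using assms unfolding scalar_aut_def by (auto simp: power2_eq_square field_simps)
  have "bij (scalar_aut \<alpha>)" by (rule o_bij[where g = "scalar_aut (inverse \<alpha>)"]) (rule ext, simp only: o_apply ff id_apply)+
  moreover have "scalar_aut \<alpha> (np_add x y) = np_add (scalar_aut \<alpha> x) (scalar_aut \<alpha> y)" for x y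
    unfolding np_add_def scalar_aut_def by (simp add: algebra_simps)
  moreover have "scalar_aut \<alpha> (np_scale c x) = np_scale c (scalar_aut \<alpha> x)" for c x
    unfolding np_scale_def scalar_aut_def by (simp add: algebra_simps)
  moreover have "scalar_aut \<alpha> (np_mult x y) = np_mult (scalar_aut \<alpha> x) (scalar_aut \<alpha> y)" for x y
    unfolding np_mult_def scalar_aut_def by (simp add: algebra_simps power2_eq_square sum_distrib_left)
  moreover have "scalar_aut \<alpha> ` U_P = U_P"
  proof
    show "scalar_aut \<alpha> ` U_P \<subseteq> U_P" unfolding U_P_def scalar_aut_def by auto
    show "U_P \<subseteq> scalar_aut \<alpha> ` U_P"
    proof
      fix x assume "x \<in> (U_P :: 'a np set)"
      hence "scalar_aut (inverse \<alpha>) x \<in> U_P" unfolding U_P_def scalar_aut_def by auto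
      then show "x \<in> scalar_aut \<alpha> ` U_P" using ff(2)[of x] by (intro image_eqI[OF sym])
    qed
  qed
  moreover have "scalar_aut \<alpha> ` Z_P = Z_P"
  proof
    show "scalar_aut \<alpha> ` Z_P \<subseteq> Z_P" unfolding Z_P_def scalar_aut_def by auto
    show "Z_P \<subseteq> scalar_aut \<alpha> ` Z_P"
    proof
      fix x assume "x \<in> (Z_P :: 'a np set)"
      hence "scalar_aut (inverse \<alpha>) x \<in> Z_P" unfolding Z_P_def scalar_aut_def by auto
      then show "x \<in> scalar_aut \<alpha> ` Z_P" using ff(2)[of x] by (intro image_eqI[OF sym])
    qed
  qed
  ultimately show ?thesis by (intro autI) auto
qed

lemma u_el_V: "i \<noteq> j \<Longrightarrow> i \<in> {1..5} \<Longrightarrow> j \<in> {1..5} \<Longrightarrow>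
   fst (u_el k :: 'a::field np) (V i j) = (if k = i \<or> k = j then - (1/2) else 1/2)"
  unfolding u_el_def by (simp add: RepV)

context
  fixes a b c m n :: nat and x :: "pvert \<Rightarrow> 'a::field" and e1 e2 e3 :: pedge
  assumes d: "a\<noteq>b" "a\<noteq>c" "a\<noteq>m" "a\<noteq>n" "b\<noteq>c" "b\<noteq>m" "b\<noteq>n" "c\<noteq>m" "c\<noteq>n" "m\<noteq>n"
  and r: "a\<in>{1..5}" "b\<in>{1..5}" "c\<in>{1..5}" "m\<in>{1..5}" "n\<in>{1..5}"
  and two: "(2::'a) \<noteq> 0"
  and supp: "\<forall>A B. Rep_pvert A \<inter> Rep_pvert B = {} \<longrightarrow> x A + x B \<noteq> 0 \<longrightarrow> E A B \<in> {e1,e2,e3}"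
  and zm: "\<forall>A B. Rep_pvert A \<inter> Rep_pvert B = {} \<longrightarrow> m \<notin> Rep_pvert A \<union> Rep_pvert B \<longrightarrow> x A + x B = 0"
  and zn: "\<forall>A B. Rep_pvert A \<inter> Rep_pvert B = {} \<longrightarrow> n \<notin> Rep_pvert A \<union> Rep_pvert B \<longrightarrow> x A + x B = 0"
begin

lemma RV: "i \<in> {a,b,c,m,n} \<Longrightarrow> j \<in> {a,b,c,m,n} \<Longrightarrow> i\<noteq>j \<Longrightarrow> Rep_pvert (V i j) = {i,j}"
  using RepV r by auto

lemma nzE: "{i,j} \<inter> {k,l} = {} \<Longrightarrow> i \<in> {a,b,c,m,n} \<Longrightarrow> j \<in> {a,b,c,m,n} \<Longrightarrow> k \<in> {a,b,c,m,n} \<Longrightarrow> l \<in> {a,b,c,m,n}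
  \<Longrightarrow> i\<noteq>j \<Longrightarrow> k\<noteq>l \<Longrightarrow> x (V i j) + x (V k l) \<noteq> 0 \<Longrightarrow> E (V i j) (V k l) \<in> {e1,e2,e3}"
  using supp RV by simp

lemma zmE: "{i,j} \<inter> {k,l} = {} \<Longrightarrow> i \<in> {a,b,c,m,n} \<Longrightarrow> j \<in> {a,b,c,m,n} \<Longrightarrow> k \<in> {a,b,c,m,n} \<Longrightarrow> l \<in> {a,b,c,m,n}
  \<Longrightarrow> i\<noteq>j \<Longrightarrow> k\<noteq>l \<Longrightarrow> m \<notin> {i,j,k,l} \<Longrightarrow> x (V i j) + x (V k l) = 0"
  using zm RV by simp

lemma znE: "{i,j} \<inter> {k,l} = {} \<Longrightarrow> i \<in> {a,b,c,m,n} \<Longrightarrow> j \<in> {a,b,c,m,n} \<Longrightarrow> k \<in> {a,b,c,m,n} \<Longrightarrow> l \<in> {a,b,c,m,n}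
  \<Longrightarrow> i\<noteq>j \<Longrightarrow> k\<noteq>l \<Longrightarrow> n \<notin> {i,j,k,l} \<Longrightarrow> x (V i j) + x (V k l) = 0"
  using zn RV by simp

lemma Einj: "{i,j} \<inter> {k,l} = {} \<Longrightarrow> {i',j'} \<inter> {k',l'} = {} \<Longrightarrow>
  i \<in> {a,b,c,m,n} \<Longrightarrow> j \<in> {a,b,c,m,n} \<Longrightarrow> k \<in> {a,b,c,m,n} \<Longrightarrow> l \<in> {a,b,c,m,n} \<Longrightarrow>
  i' \<in> {a,b,c,m,n} \<Longrightarrow> j' \<in> {a,b,c,m,n} \<Longrightarrow> k' \<in> {a,b,c,m,n} \<Longrightarrow> l' \<in> {a,b,c,m,n} \<Longrightarrow>
  i\<noteq>j \<Longrightarrow> k\<noteq>l \<Longrightarrow> i'\<noteq>j' \<Longrightarrow> k'\<noteq>l' \<Longrightarrow>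
  E (V i j) (V k l) = E (V i' j') (V k' l') \<Longrightarrow> {{i,j},{k,l}} = {{i',j'},{k',l'}}"
proof -
  assume h: "{i,j} \<inter> {k,l} = {}" "{i',j'} \<inter> {k',l'} = {}"
    "i \<in> {a,b,c,m,n}" "j \<in> {a,b,c,m,n}" "k \<in> {a,b,c,m,n}" "l \<in> {a,b,c,m,n}"
    "i' \<in> {a,b,c,m,n}" "j' \<in> {a,b,c,m,n}" "k' \<in> {a,b,c,m,n}" "l' \<in> {a,b,c,m,n}"
    "i\<noteq>j" "k\<noteq>l" "i'\<noteq>j'" "k'\<noteq>l'" and eq: "E (V i j) (V k l) = E (V i' j') (V k' l')"
  have "Rep_pedge (E (V i j) (V k l)) = {V i j, V k l}" using h RV by (intro RepE) simp
  moreover have "Rep_pedge (E (V i' j') (V k' l')) = {V i' j', V k' l'}" using h RV by (intro RepE) simp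
  ultimately have "{V i j, V k l} = {V i' j', V k' l'}" using eq by simp
  hence "Rep_pvert ` {V i j, V k l} = Rep_pvert ` {V i' j', V k' l'}" by simp
  thus ?thesis using h RV by simp
qed

lemma four: "E1 \<in> {e1,e2,e3} \<Longrightarrow> E2 \<in> {e1,e2,e3} \<Longrightarrow> E3 \<in> {e1,e2,e3} \<Longrightarrow> E4 \<in> {e1,e2,e3} \<Longrightarrow>
  E1 \<noteq> E2 \<Longrightarrow> E1 \<noteq> E3 \<Longrightarrow> E1 \<noteq> E4 \<Longrightarrow> E2 \<noteq> E3 \<Longrightarrow> E2 \<noteq> E4 \<Longrightarrow> E3 \<noteq> E4 \<Longrightarrow> False"
  by auto

lemmas facts = d r d[symmetric]

lemma g1: "x (V a b) + x (V c n) = 0" by (rule zmE) (use facts in auto)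
lemma g2: "x (V a c) + x (V b n) = 0" by (rule zmE) (use facts in auto)
lemma g3: "x (V b c) + x (V a n) = 0" by (rule zmE) (use facts in auto)
lemma h1: "x (V a b) + x (V c m) = 0" by (rule znE) (use facts in auto)
lemma h2: "x (V a c) + x (V b m) = 0" by (rule znE) (use facts in auto)
lemma h3: "x (V b c) + x (V a m) = 0" by (rule znE) (use facts in auto)

lemma vcn: "x (V c n) = - x (V a b)" using g1 by (simp add: add_eq_0_iff)
lemma vbn: "x (V b n) = - x (V a c)" using g2 by (simp add: add_eq_0_iff)
lemma van: "x (V a n) = - x (V b c)" using g3 by (simp add: add_eq_0_iff)
lemma vcm: "x (V c m) = - x (V a b)" using h1 by (simp add: add_eq_0_iff)
lemma vbm: "x (V b m) = - x (V a c)" using h2 by (simp add: add_eq_0_iff)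
lemma vam: "x (V a m) = - x (V b c)" using h3 by (simp add: add_eq_0_iff)

lemma Eneq: assumes ne: "\<not> {{i,j},{k,l}} = {{i',j'},{k',l'}}" and h: "{i,j} \<inter> {k,l} = {}" "{i',j'} \<inter> {k',l'} = {}"
  "i \<in> {a,b,c,m,n}" "j \<in> {a,b,c,m,n}" "k \<in> {a,b,c,m,n}" "l \<in> {a,b,c,m,n}"
  "i' \<in> {a,b,c,m,n}" "j' \<in> {a,b,c,m,n}" "k' \<in> {a,b,c,m,n}" "l' \<in> {a,b,c,m,n}"
  "i\<noteq>j" "k\<noteq>l" "i'\<noteq>j'" "k'\<noteq>l'"
  shows "E (V i j) (V k l) \<noteq> E (V i' j') (V k' l')"
  using Einj[OF h] ne by blast

lemma nn: "(p::'a) + q \<noteq> 0 \<Longrightarrow> - p + - q \<noteq> 0"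
  by (metis minus_add_distrib neg_equal_0_iff_equal)

lemma allV: "B \<in> {V a b, V a c, V b c, V a m, V a n, V b m, V b n, V c m, V c n, V m n}"
proof -
  have sub: "{a,b,c,m,n} \<subseteq> {1..5}" using r by auto
  have "card {a,b,c,m,n} = 5" using d by simp
  hence eq: "{a,b,c,m,n} = {1..5}" using sub by (intro card_subset_eq) auto
  obtain i j where ij: "i \<noteq> j" "i \<in> {1..5}" "j \<in> {1..5}" "B = V i j" using pvert_V by blast
  have "i \<in> {a,b,c,m,n}" "j \<in> {a,b,c,m,n}" using ij eq by auto
  thus ?thesis using ij(1,4) by (auto simp: V_sym)
qed


lemma Cc: assumes nz: "x (V b c) + x (V a c) \<noteq> 0"
  shows "\<exists>l. \<forall>B. x B = l * fst (u_el c :: 'a np) B"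
proof -
  have qr: "x (V a c) + x (V a b) = 0"
  proof (rule ccontr)
    assume q: "x (V a c) + x (V a b) \<noteq> 0"
    have "E (V b m) (V c n) \<in> {e1,e2,e3}" apply (rule nzE; (use facts in \<open>auto simp: vcn vbn van vcm vbm vam\<close>)?) using nn[OF q] by (simp add: vbm vcn)
    moreover have "E (V b n) (V c m) \<in> {e1,e2,e3}" apply (rule nzE; (use facts in \<open>auto simp: vcn vbn van vcm vbm vam\<close>)?) using nn[OF q] by (simp add: vbn vcm)
    moreover have "E (V a m) (V b n) \<in> {e1,e2,e3}" apply (rule nzE; (use facts in \<open>auto simp: vcn vbn van vcm vbm vam\<close>)?) using nn[OF nz] by (simp add: vam vbn)
    moreover have "E (V a n) (V b m) \<in> {e1,e2,e3}" apply (rule nzE; (use facts in \<open>auto simp: vcn vbn van vcm vbm vam\<close>)?) using nn[OF nz] by (simp add: van vbm)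
    ultimately show False apply (rule four) apply (rule Eneq; (use facts in \<open>auto simp: doubleton_eq_iff\<close>))+ done
  qed
  have pr: "x (V b c) + x (V a b) = 0"
  proof (rule ccontr)
    assume q: "x (V b c) + x (V a b) \<noteq> 0"
    have "E (V a m) (V c n) \<in> {e1,e2,e3}" apply (rule nzE; (use facts in \<open>auto simp: vcn vbn van vcm vbm vam\<close>)?) using nn[OF q] by (simp add: vam vcn)
    moreover have "E (V a n) (V c m) \<in> {e1,e2,e3}" apply (rule nzE; (use facts in \<open>auto simp: vcn vbn van vcm vbm vam\<close>)?) using nn[OF q] by (simp add: van vcm)
    moreover have "E (V a m) (V b n) \<in> {e1,e2,e3}" apply (rule nzE; (use facts in \<open>auto simp: vcn vbn van vcm vbm vam\<close>)?) using nn[OF nz] by (simp add: vam vbn)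
    moreover have "E (V a n) (V b m) \<in> {e1,e2,e3}" apply (rule nzE; (use facts in \<open>auto simp: vcn vbn van vcm vbm vam\<close>)?) using nn[OF nz] by (simp add: van vbm)
    ultimately show False apply (rule four) apply (rule Eneq; (use facts in \<open>auto simp: doubleton_eq_iff\<close>))+ done
  qed
  have pq: "x (V a c) = x (V b c)" "x (V a b) = - x (V b c)" using qr pr by (simp_all add: add_eq_0_iff)
  have pt: "x (V b c) + x (V m n) = 0"
  proof (rule ccontr)
    assume q: "x (V b c) + x (V m n) \<noteq> 0"
    have "E (V b c) (V m n) \<in> {e1,e2,e3}" apply (rule nzE; (use facts in \<open>auto simp: vcn vbn van vcm vbm vam\<close>)?) using q by simp
    moreover have "E (V a c) (V m n) \<in> {e1,e2,e3}" apply (rule nzE; (use facts in \<open>auto simp: vcn vbn van vcm vbm vam\<close>)?) using q pq by simp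
    moreover have "E (V a m) (V b n) \<in> {e1,e2,e3}" apply (rule nzE; (use facts in \<open>auto simp: vcn vbn van vcm vbm vam\<close>)?) using nn[OF nz] by (simp add: vam vbn)
    moreover have "E (V a n) (V b m) \<in> {e1,e2,e3}" apply (rule nzE; (use facts in \<open>auto simp: vcn vbn van vcm vbm vam\<close>)?) using nn[OF nz] by (simp add: van vbm)
    ultimately show False apply (rule four) apply (rule Eneq; (use facts in \<open>auto simp: doubleton_eq_iff\<close>))+ done
  qed
  have t: "x (V m n) = - x (V b c)" using pt by (simp add: add_eq_0_iff)
  have "x B = (- 2 * x (V b c)) * fst (u_el c :: 'a np) B" for B
    using allV[of B] facts two
    by (auto simp: u_el_V vcn vbn van vcm vbm vam pq t V_sym)
  thus ?thesis by blast
qed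

lemma Cv: assumes "x (V b c) + x (V a c) = 0" "x (V a c) + x (V a b) = 0" "x (V b c) + x (V a b) = 0"
  shows "\<forall>B. x B = (if B = V m n then x (V m n) else 0)"
proof -
  have "x (V a c) = - x (V b c)" "x (V a b) = - x (V a c)" "x (V a b) = - x (V b c)"
    using assms by (simp_all add: add_eq_0_iff)
  hence "2 * x (V b c) = 0" by (metis minus_minus mult_2 add_eq_0_iff)
  hence z: "x (V b c) = 0" using two by simp
  hence zz: "x (V a c) = 0" "x (V a b) = 0" using assms by (simp_all add: add_eq_0_iff)
  have "V m n \<noteq> V a b" "V m n \<noteq> V a c" "V m n \<noteq> V b c" "V m n \<noteq> V a m" "V m n \<noteq> V a n"
     "V m n \<noteq> V b m" "V m n \<noteq> V b n" "V m n \<noteq> V c m" "V m n \<noteq> V c n"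
    by (subst V_eq; (use facts in \<open>auto simp: doubleton_eq_iff\<close>))+
  note ne = this
  show ?thesis
  proof
    fix B show "x B = (if B = V m n then x (V m n) else 0)"
      using allV[of B] z zz ne by (auto simp: vcn vbn van vcm vbm vam)
  qed
qed

end

definition avoid :: "pedge \<Rightarrow> nat \<Rightarrow> bool" where
  "avoid e m \<longleftrightarrow> (\<forall>A\<in>Rep_pedge e. m \<notin> Rep_pvert A)"

lemma avoid_unique: assumes "avoid e m" "avoid e m'" "m \<in> {1..5}" "m' \<in> {1..5}" shows "m = m'"
proof (rule ccontr)
  assume ne: "m \<noteq> m'"
  obtain A B where AB: "Rep_pvert A \<inter> Rep_pvert B = {}" "e = E A B" using pedge_E by blast
  have R: "Rep_pedge e = {A,B}" using AB RepE by simp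
  have "card (Rep_pvert A \<union> Rep_pvert B) = 4"
    using AB(1) Rep_pvert_card[of A] Rep_pvert_card[of B] card_Un_disjoint
    by (metis add_2_eq_Suc' card.infinite nat.simps(3) numeral_2_eq_2 numeral_Bit0 one_add_one zero_neq_numeral)
  moreover have "Rep_pvert A \<union> Rep_pvert B \<subseteq> {1..5} - {m,m'}"
    using assms(1,2) R Rep_pvert_sub[of A] Rep_pvert_sub[of B] unfolding avoid_def by auto
  moreover have "card ({1..5::nat} - {m,m'}) = 3" using ne assms(3,4) by (simp add: card_Diff_subset)
  ultimately show False by (metis card_mono finite_Diff finite_atLeastAtMost numeral_le_iff semiring_norm(69) semiring_norm(72) num.distinct(1) le_num_simps(1) numeral_One) 
qed

lemma step1:
  fixes x :: "pvert \<Rightarrow> 'a::field"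
  assumes supp: "\<forall>e. sv x e \<noteq> 0 \<longrightarrow> e \<in> {e1,e2,e3}"
  shows "\<exists>m n. m \<noteq> n \<and> m \<in> {1..5} \<and> n \<in> {1..5} \<and> (\<forall>e. avoid e m \<longrightarrow> sv x e = 0) \<and> (\<forall>e. avoid e n \<longrightarrow> sv x e = 0)"
proof -
  define N where "N = {m \<in> {1..5::nat}. \<exists>e. avoid e m \<and> sv x e \<noteq> 0}"
  define f where "f m = (SOME e. avoid e m \<and> sv x e \<noteq> 0)" for m
  have fm: "m \<in> N \<Longrightarrow> avoid (f m) m \<and> sv x (f m) \<noteq> 0" for m
    unfolding N_def f_def by (rule someI_ex) auto
  have fN: "f ` N \<subseteq> {e1,e2,e3}" using fm supp by blast
  have "inj_on f N"
  proof (rule inj_onI)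
    fix m m' assume "m \<in> N" "m' \<in> N" "f m = f m'"
    thus "m = m'" using fm avoid_unique unfolding N_def by (metis (no_types, lifting) mem_Collect_eq)
  qed
  note inj = this
  have "card N = card (f ` N)" using inj by (simp add: card_image)
  also have "\<dots> \<le> card {e1,e2,e3}" by (rule card_mono) (simp_all add: fN)
  also have "\<dots> \<le> 3" using card_length[of "[e1,e2,e3]"] by simp
  finally have "card N \<le> 3" .
  have fin: "finite ({1..5::nat} - N)" by simp
  have "N \<subseteq> {1..5}" unfolding N_def by auto
  hence "card ({1..5::nat} - N) = 5 - card N" by (simp add: card_Diff_subset finite_subset)
  hence "card ({1..5::nat} - N) \<ge> 2" using \<open>card N \<le> 3\<close> by simp
  hence "\<not> (\<forall>a\<in>{1..5::nat} - N. \<forall>b\<in>{1..5::nat} - N. a = b)" using card_le_Suc0_iff_eq[OF fin] by auto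
  then obtain m n where "m \<in> {1..5} - N" "n \<in> {1..5} - N" "m \<noteq> n" by blast
  thus ?thesis unfolding N_def by auto
qed

lemma classify:
  fixes x :: "pvert \<Rightarrow> 'a::field"
  assumes two: "(2::'a) \<noteq> 0" and nz: "\<exists>B. x B \<noteq> 0" and supp: "\<forall>e. sv x e \<noteq> 0 \<longrightarrow> e \<in> {e1,e2,e3}"
  shows "(\<exists>A t. t \<noteq> 0 \<and> (\<forall>B. x B = (if B = A then t else 0)))
       \<or> (\<exists>k\<in>{1..5}. \<exists>l. l \<noteq> 0 \<and> (\<forall>B. x B = l * fst (u_el k :: 'a np) B))"
proof -
  obtain m n where mn: "m \<noteq> n" "m \<in> {1..5}" "n \<in> {1..5}"
    and zm0: "\<forall>e. avoid e m \<longrightarrow> sv x e = 0" and zn0: "\<forall>e. avoid e n \<longrightarrow> sv x e = 0"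
    using step1[OF supp] by blast
  have "card ({1..5::nat} - {m,n}) = 3" using mn by (simp add: card_Diff_subset)
  then obtain a b c where abc: "{1..5::nat} - {m,n} = {a,b,c}" "a \<noteq> b" "b \<noteq> c" "a \<noteq> c"
    using card_3_iff by metis
  have r: "a\<in>{1..5}" "b\<in>{1..5}" "c\<in>{1..5}" using abc(1) by blast+
  have d: "a\<noteq>m" "a\<noteq>n" "b\<noteq>m" "b\<noteq>n" "c\<noteq>m" "c\<noteq>n" using abc(1) by blast+
  have supp': "\<forall>A B. Rep_pvert A \<inter> Rep_pvert B = {} \<longrightarrow> x A + x B \<noteq> 0 \<longrightarrow> E A B \<in> {e1,e2,e3}"
    using supp sv_E by metis
  have zm: "\<forall>A B. Rep_pvert A \<inter> Rep_pvert B = {} \<longrightarrow> m \<notin> Rep_pvert A \<union> Rep_pvert B \<longrightarrow> x A + x B = 0"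
  proof (intro allI impI)
    fix A B assume h: "Rep_pvert A \<inter> Rep_pvert B = {}" "m \<notin> Rep_pvert A \<union> Rep_pvert B"
    hence "avoid (E A B) m" unfolding avoid_def using RepE[OF h(1)] by auto
    thus "x A + x B = 0" using zm0 sv_E[OF h(1)] by metis
  qed
  have zn: "\<forall>A B. Rep_pvert A \<inter> Rep_pvert B = {} \<longrightarrow> n \<notin> Rep_pvert A \<union> Rep_pvert B \<longrightarrow> x A + x B = 0"
  proof (intro allI impI)
    fix A B assume h: "Rep_pvert A \<inter> Rep_pvert B = {}" "n \<notin> Rep_pvert A \<union> Rep_pvert B"
    hence "avoid (E A B) n" unfolding avoid_def using RepE[OF h(1)] by auto
    thus "x A + x B = 0" using zn0 sv_E[OF h(1)] by metis
  qed
  note H = abc(2) abc(4) d(1,2) abc(3) d(3-6) mn(1) r mn(2,3) two supp' zm zn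
  note H' = H abc(2-4)[symmetric] d[symmetric] mn(1)[symmetric]
  have lnz: "l \<noteq> 0" if "\<forall>B. x B = l * fst (u_el k :: 'a np) B" for l k
    using that nz by auto
  show ?thesis
  proof (cases "x (V b c) + x (V a c) \<noteq> 0")
    case True
    then obtain l where "\<forall>B. x B = l * fst (u_el c :: 'a np) B" using Cc[OF H] by blast
    thus ?thesis using lnz r by blast
  next
    case F1: False
    show ?thesis
    proof (cases "x (V c a) + x (V b a) \<noteq> 0")
      case True
      then obtain l where "\<forall>B. x B = l * fst (u_el a :: 'a np) B"
        using Cc[of b c a m n x e1 e2 e3] H' by blast
      thus ?thesis using lnz r by blast
    next
      case F2: False
      show ?thesis
      proof (cases "x (V a b) + x (V c b) \<noteq> 0")
        case True
        then obtain l where "\<forall>B. x B = l * fst (u_el b :: 'a np) B"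
          using Cc[of c a b m n x e1 e2 e3] H' by blast
        thus ?thesis using lnz r by blast
      next
        case F3: False
        have e: "x (V b c) + x (V a c) = 0" "x (V a c) + x (V a b) = 0" "x (V b c) + x (V a b) = 0"
          using F1 F2 F3 by (simp_all add: V_sym add.commute)
        have "\<forall>B. x B = (if B = V m n then x (V m n) else 0)" using Cv[OF H e] .
        moreover have "x (V m n) \<noteq> 0" using calculation nz by (metis)
        ultimately show ?thesis by blast
      qed
    qed
  qed
qed

lemma vtx_U: "vtx A \<in> U_P" unfolding vtx_def U_P_def by simp

lemma sv_vtx: "sv (fst (vtx A :: 'a::field np)) e = (if A \<in> Rep_pedge e then 1 else 0)"
proof -
  obtain C D where CD: "Rep_pvert C \<inter> Rep_pvert D = {}" "e = E C D" using pedge_E by blast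
  have "C \<noteq> D" using disj_neq[OF CD(1)] .
  thus ?thesis using CD unfolding sv_def vtx_def by (auto simp: RepE)
qed

lemma vtx_nz: "vtx A \<noteq> (npz :: 'a::field np)"
  unfolding vtx_def npz_def by (auto simp: fun_eq_iff)

lemma mult_vtx_nonadj: assumes "A \<noteq> B" "Rep_pvert A \<inter> Rep_pvert B \<noteq> {}"
  shows "np_mult (vtx A) (vtx B) = (npz :: 'a::field np)"
proof -
  have "\<not> (A \<in> Rep_pedge e \<and> B \<in> Rep_pedge e)" for e
  proof
    assume h: "A \<in> Rep_pedge e \<and> B \<in> Rep_pedge e"
    obtain C D where CD: "Rep_pvert C \<inter> Rep_pvert D = {}" "e = E C D" using pedge_E by blast
    hence "{A,B} = {C,D}" using h assms(1) RepE[OF CD(1)] by auto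
    thus False using CD(1) assms(2) by (auto simp: doubleton_eq_iff Int_commute)
  qed
  thus ?thesis unfolding np_mult_sv npz_def by (auto simp: sv_vtx fun_eq_iff)
qed

lemma mult_vtx_adj: assumes "Rep_pvert A \<inter> Rep_pvert B = {}"
  shows "np_mult (vtx A) (vtx B) \<noteq> (npz :: 'a::field np)"
proof
  assume "np_mult (vtx A) (vtx B) = (npz :: 'a::field np)"
  hence "sv (fst (vtx A :: 'a np)) (E A B) * sv (fst (vtx B :: 'a np)) (E A B) = 0"
    unfolding np_mult_sv npz_def by (metis snd_conv)
  thus False using RepE[OF assms] by (simp add: sv_vtx)
qed

lemma Rep_pvert_fin[simp]: "finite (Rep_pvert A)" using Rep_pvert_sub[of A] finite_subset by blast

lemma triangle_free: assumes "Rep_pvert A \<inter> Rep_pvert B = {}" "Rep_pvert A \<inter> Rep_pvert C = {}" "Rep_pvert B \<inter> Rep_pvert C = {}"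
  shows False
proof -
  have "card (Rep_pvert A \<union> Rep_pvert B \<union> Rep_pvert C) = 6"
    using assms Rep_pvert_card[of A] Rep_pvert_card[of B] Rep_pvert_card[of C] Rep_pvert_fin
    by (simp add: card_Un_disjoint Int_Un_distrib2)
  moreover have "Rep_pvert A \<union> Rep_pvert B \<union> Rep_pvert C \<subseteq> {1..5}" using Rep_pvert_sub by blast
  hence "card (Rep_pvert A \<union> Rep_pvert B \<union> Rep_pvert C) \<le> 5" using card_mono[of "{1..5::nat}"] by fastforce
  ultimately show False by simp
qed

lemma incident3: "\<exists>g1 g2 g3. \<forall>e. A \<in> Rep_pedge e \<longrightarrow> e \<in> {g1,g2,g3}"
proof -
  obtain i j where ij: "i \<noteq> j" "i \<in> {1..5}" "j \<in> {1..5}" "A = V i j" using pvert_V by blast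
  have "card ({1..5::nat} - {i,j}) = 3" using ij by (simp add: card_Diff_subset)
  then obtain k l p where klp: "{1..5::nat} - {i,j} = {k,l,p}" "k \<noteq> l" "l \<noteq> p" "k \<noteq> p"
    using card_3_iff by metis
  have r: "k \<in> {1..5}" "l \<in> {1..5}" "p \<in> {1..5}" "k \<notin> {i,j}" "l \<notin> {i,j}" "p \<notin> {i,j}" using klp(1) by blast+
  have "e \<in> {E A (V k l), E A (V k p), E A (V l p)}" if "A \<in> Rep_pedge e" for e
  proof -
    obtain C D where CD: "Rep_pvert C \<inter> Rep_pvert D = {}" "e = E C D" using pedge_E by blast
    have "A = C \<or> A = D" using that RepE[OF CD(1)] CD(2) by auto
    then obtain B where B: "Rep_pvert A \<inter> Rep_pvert B = {}" "e = E A B" using CD E_sym by (metis Int_commute)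
    obtain s t where st: "s \<noteq> t" "s \<in> {1..5}" "t \<in> {1..5}" "B = V s t" using pvert_V by blast
    have "{s,t} \<inter> {i,j} = {}" using B(1) st ij RepV by (metis Int_commute)
    hence "s \<in> {k,l,p}" "t \<in> {k,l,p}" using st klp(1) by blast+
    hence "B \<in> {V k l, V k p, V l p}" using st(1,4) by (auto simp: V_sym)
    thus ?thesis using B(2) by auto
  qed
  thus ?thesis by blast
qed

lemma aut_vtx_classify:
  fixes \<phi> :: "'a::field np \<Rightarrow> 'a np"
  assumes two: "(2::'a) \<noteq> 0" and aut: "\<phi> \<in> autNP"
  shows "(\<exists>B t. t \<noteq> 0 \<and> \<phi> (vtx A) = np_scale t (vtx B))
       \<or> (\<exists>k\<in>{1..5}. \<exists>l. l \<noteq> 0 \<and> \<phi> (vtx A) = np_scale l (u_el k))"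
proof -
  define v where "v A = fst (\<phi> (vtx A))" for A
  have phiU: "\<phi> (vtx A) = (v A, \<lambda>_. 0)" for A
    using aut_inU[OF aut vtx_U] unfolding v_def U_P_def by (metis (mono_tags) mem_Collect_eq prod.collapse)
  have prod: "np_mult (\<phi> (vtx A)) (\<phi> (vtx B)) = (\<lambda>_. 0, \<lambda>e. sv (v A) e * sv (v B) e)" for A B
    unfolding np_mult_sv v_def by simp
  define S where "S A = {e. sv (v A) e \<noteq> 0}" for A
  have nonadj: "sv (v A) e * sv (v B) e = 0" if "A \<noteq> B" "Rep_pvert A \<inter> Rep_pvert B \<noteq> {}" for A B e
  proof -
    have "\<phi> (np_mult (vtx A) (vtx B)) = npz" using mult_vtx_nonadj[OF that, where 'a='a] aut_zero[OF aut] by simp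
    thus ?thesis using aut_mult[OF aut] prod unfolding npz_def by (metis snd_conv)
  qed
  have adj: "\<exists>e. sv (v A) e * sv (v B) e \<noteq> 0" if "Rep_pvert A \<inter> Rep_pvert B = {}" for A B
  proof -
    have "\<phi> (np_mult (vtx A) (vtx B)) \<noteq> npz" using mult_vtx_adj[OF that] aut_nz[OF aut] by simp
    hence "np_mult (\<phi> (vtx A)) (\<phi> (vtx B)) \<noteq> npz" using aut_mult[OF aut] by metis
    hence "(\<lambda>e. sv (v A) e * sv (v B) e) \<noteq> (\<lambda>_. 0)" using prod unfolding npz_def by auto
    thus ?thesis by auto
  qed
  have three: "False" if "f \<in> S A" "f \<in> S B" "f \<in> S C" "A \<noteq> B" "A \<noteq> C" "B \<noteq> C" for f A B C
  proof -
    have "Rep_pvert A \<inter> Rep_pvert B = {}" "Rep_pvert A \<inter> Rep_pvert C = {}" "Rep_pvert B \<inter> Rep_pvert C = {}"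
      using that nonadj[of A B f] nonadj[of A C f] nonadj[of B C f] unfolding S_def by auto
    thus False by (rule triangle_free)
  qed
  define c where "c e = (SOME f. \<forall>A\<in>Rep_pedge e. f \<in> S A)" for e
  have cS: "\<forall>A\<in>Rep_pedge e. c e \<in> S A" for e
  proof -
    obtain C D where CD: "Rep_pvert C \<inter> Rep_pvert D = {}" "e = E C D" using pedge_E by blast
    obtain f where "sv (v C) f * sv (v D) f \<noteq> 0" using adj[OF CD(1)] by blast
    hence "\<forall>A\<in>Rep_pedge e. f \<in> S A" using CD RepE unfolding S_def by auto
    thus ?thesis unfolding c_def by (rule someI)
  qed
  have "inj c"
  proof (rule injI)
    fix e e' assume eq: "c e = c e'"
    obtain C D where CD: "Rep_pvert C \<inter> Rep_pvert D = {}" "e = E C D" using pedge_E by blast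
    obtain C' D' where CD': "Rep_pvert C' \<inter> Rep_pvert D' = {}" "e' = E C' D'" using pedge_E by blast
    have R: "Rep_pedge e = {C,D}" "Rep_pedge e' = {C',D'}" using CD CD' RepE by auto
    have ne: "C \<noteq> D" "C' \<noteq> D'" using CD(1) CD'(1) disj_neq by auto
    have m: "c e \<in> S C" "c e \<in> S D" "c e \<in> S C'" "c e \<in> S D'" using cS[of e] cS[of e'] R eq by auto
    have "C' \<in> {C,D}" using three[OF m(1,2,3)] ne by blast
    moreover have "D' \<in> {C,D}" using three[OF m(1,2,4)] ne by blast
    ultimately have "{C',D'} = {C,D}" using ne by auto
    thus "e = e'" using R by (metis Rep_pedge_inject)
  qed
  hence "range c = UNIV" using endo_inj_surj[of UNIV c] by simp
  hence inS: "\<exists>e. A \<in> Rep_pedge e \<and> f = c e" if "f \<in> S A" for f A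
  proof -
    obtain e where e: "f = c e" using \<open>range c = UNIV\<close> by (metis UNIV_I image_iff)
    obtain C D where CD: "Rep_pvert C \<inter> Rep_pvert D = {}" "e = E C D" using pedge_E by blast
    have R: "Rep_pedge e = {C,D}" using CD RepE by auto
    have "f \<in> S C" "f \<in> S D" using cS[of e] R e by auto
    hence "A \<in> {C,D}" using three[of f C D A] that disj_neq[OF CD(1)] by blast
    thus ?thesis using R e by auto
  qed
  obtain g1 g2 g3 where g: "\<forall>e. A \<in> Rep_pedge e \<longrightarrow> e \<in> {g1,g2,g3}" using incident3 by blast
  have supp: "\<forall>e. sv (v A) e \<noteq> 0 \<longrightarrow> e \<in> {c g1, c g2, c g3}"
    using inS g unfolding S_def by blast
  have nz: "\<exists>B. v A B \<noteq> 0"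
  proof (rule ccontr)
    assume "\<not> (\<exists>B. v A B \<noteq> 0)"
    hence "\<phi> (vtx A) = npz" using phiU unfolding npz_def by (simp add: fun_eq_iff)
    thus False using aut_nz[OF aut] vtx_nz by metis
  qed
  from classify[OF two nz supp] show ?thesis
  proof
    assume "\<exists>B t. t \<noteq> 0 \<and> (\<forall>C. v A C = (if C = B then t else 0))"
    then obtain B t where "t \<noteq> 0" "\<forall>C. v A C = (if C = B then t else 0)" by blast
    hence "\<phi> (vtx A) = np_scale t (vtx B)" using phiU unfolding np_scale_def vtx_def by (auto simp: fun_eq_iff)
    thus ?thesis using \<open>t \<noteq> 0\<close> by blast
  next
    assume "\<exists>k\<in>{1..5}. \<exists>l. l \<noteq> 0 \<and> (\<forall>B. v A B = l * fst (u_el k :: 'a np) B)"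
    then obtain k l where "k \<in> {1..5}" "l \<noteq> 0" "\<forall>B. v A B = l * fst (u_el k :: 'a np) B" by blast
    hence "\<phi> (vtx A) = np_scale l (u_el k)" using phiU unfolding np_scale_def u_el_def by (auto simp: fun_eq_iff)
    thus ?thesis using \<open>k \<in> {1..5}\<close> \<open>l \<noteq> 0\<close> by blast
  qed
qed

lemma bold_vtx: "i \<in> {1..5} \<Longrightarrow> j \<in> {1..5} \<Longrightarrow> bold i j = vtx (V i j)"
  unfolding bold_def V_def by simp

lemma bold_u: "i \<in> {1..5} \<Longrightarrow> bold i 6 = u_el i" "i \<in> {1..5} \<Longrightarrow> bold 6 i = u_el i"
  unfolding bold_def by auto

lemma bold_sym: "i \<in> {1..6} \<Longrightarrow> j \<in> {1..6} \<Longrightarrow> bold i j = bold j i" unfolding bold_def by (auto simp: insert_commute)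

definition BP :: "('a::field np \<Rightarrow> 'a np) \<Rightarrow> (nat \<Rightarrow> nat) \<Rightarrow> bool" where
  "BP \<psi> p \<longleftrightarrow> \<psi> \<in> autNP \<and> p permutes {1..6} \<and>
     (\<forall>i\<in>{1..6}. \<forall>j\<in>{1..6}. i \<noteq> j \<longrightarrow> \<psi> (bold i j) = bold (p i) (p j))"

lemma BP_id: "BP id id" unfolding BP_def by (simp add: aut_id permutes_id)

lemma BP_comp: assumes "BP \<psi> p" "BP \<psi>' p'" shows "BP (\<psi> \<circ> \<psi>') (p \<circ> p')"
proof -
  have pp: "p' permutes {1..6}" using assms(2) unfolding BP_def by blast
  have "p' i \<in> {1..6}" if "i \<in> {1..6}" for i using pp that permutes_in_image by metis
  moreover have "p' i \<noteq> p' j" if "i \<noteq> j" for i j using pp that by (metis permutes_inj injD)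
  ultimately show ?thesis using assms unfolding BP_def by (auto simp: aut_comp permutes_compose)
qed

context fixes a b :: nat assumes ab: "a \<in> {1..5}" "b \<in> {1..5}"
begin

definition sV :: "pvert \<Rightarrow> pvert" where "sV A = Abs_pvert (Transposition.transpose a b ` Rep_pvert A)"

lemma s5: "Transposition.transpose a b ` {1..5} = {1..5}" using ab by simp

lemma Rep_sV: "Rep_pvert (sV A) = Transposition.transpose a b ` Rep_pvert A"
proof -
  have "Transposition.transpose a b ` Rep_pvert A \<subseteq> {1..5}" using Rep_pvert_sub[of A] s5 by blast
  moreover have "card (Transposition.transpose a b ` Rep_pvert A) = 2"
    using Rep_pvert_card[of A] by (simp add: card_image)
  ultimately show ?thesis unfolding sV_def by (intro Abs_pvert_inverse) simp
qed

lemma sV_sV[simp]: "sV (sV A) = A"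
proof -
  have "Rep_pvert (sV (sV A)) = Rep_pvert A" by (simp add: Rep_sV image_image)
  thus ?thesis using Rep_pvert_inject by blast
qed

lemma sV_eq: "(sV B = C) = (B = sV C)" by (metis sV_sV)

lemma sV_inj: "inj sV" by (metis injI sV_sV)

definition sE :: "pedge \<Rightarrow> pedge" where "sE e = Abs_pedge (sV ` Rep_pedge e)"

lemma Rep_sE: "Rep_pedge (sE e) = sV ` Rep_pedge e"
proof -
  obtain A B where AB: "Rep_pedge e = {A,B}" "Rep_pvert A \<inter> Rep_pvert B = {}" using Rep_pedge_ex by blast
  have "Rep_pvert (sV A) \<inter> Rep_pvert (sV B) = {}" using AB(2) by (simp add: Rep_sV image_Int[symmetric])
  thus ?thesis unfolding sE_def using AB by (subst Abs_pedge_inverse) auto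
qed

lemma sE_sE[simp]: "sE (sE e) = e"
proof -
  have "Rep_pedge (sE (sE e)) = Rep_pedge e" by (simp add: Rep_sE image_image)
  thus ?thesis using Rep_pedge_inject by blast
qed

lemma sv_sV: "sv (\<lambda>A. v (sV A)) e = sv v (sE e)"
  unfolding sv_def Rep_sE by (simp add: sum.reindex inj_on_subset[OF sV_inj])

definition Phi :: "'a::field np \<Rightarrow> 'a np" where "Phi x = (fst x \<circ> sV, snd x \<circ> sE)"

lemma Phi_aut: "(Phi :: 'a::field np \<Rightarrow> 'a np) \<in> autNP"
proof -
  have "(\<lambda>x::'a np. ((\<lambda>v. v \<circ> sV) (fst x), snd x \<circ> sE)) \<in> autNP"
    by (rule mkaut) (auto simp: o_def sv_sV)
  thus ?thesis unfolding Phi_def by simp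
qed

lemma sV_V: "i \<in> {1..5} \<Longrightarrow> j \<in> {1..5} \<Longrightarrow> i \<noteq> j \<Longrightarrow>
   sV (V i j) = V (Transposition.transpose a b i) (Transposition.transpose a b j)"
  unfolding sV_def using RepV by (simp add: V_def)

lemma s_in: "i \<in> {1..5} \<Longrightarrow> Transposition.transpose a b i \<in> {1..5}" using s5 by blast

lemma Phi_vtx: "i \<in> {1..5} \<Longrightarrow> j \<in> {1..5} \<Longrightarrow> i \<noteq> j \<Longrightarrow>
   Phi (vtx (V i j)) = vtx (V (Transposition.transpose a b i) (Transposition.transpose a b j))"
  unfolding Phi_def vtx_def by (simp add: fun_eq_iff o_def sV_eq sV_V)

lemma Phi_u: "Phi (u_el i) = u_el (Transposition.transpose a b i)"
  unfolding Phi_def u_el_def by (auto simp: fun_eq_iff o_def Rep_sV in_transpose_image_iff transpose_eq_iff)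

lemma Phi_BP: "BP (Phi :: 'a::field np \<Rightarrow> 'a np) (Transposition.transpose a b)"
  unfolding BP_def
proof (intro conjI ballI impI)
  show "Phi \<in> autNP" by (rule Phi_aut)
  show "Transposition.transpose a b permutes {1..6}" using ab by (auto intro: permutes_swap_id)
  fix i j :: nat assume ij: "i \<in> {1..6}" "j \<in> {1..6}" "i \<noteq> j"
  have s6: "Transposition.transpose a b 6 = 6" using ab by auto
  show "Phi (bold i j :: 'a np) = bold (Transposition.transpose a b i) (Transposition.transpose a b j)"
  proof (cases "i = 6 \<or> j = 6")
    case True
    show ?thesis
    proof (cases "i = 6")
      case True
      hence j5: "j \<in> {1..5}" using ij by auto
      have "bold i j = (u_el j :: 'a np)" using True j5 unfolding bold_def by auto
      moreover have "bold (Transposition.transpose a b i) (Transposition.transpose a b j) = (u_el (Transposition.transpose a b j) :: 'a np)"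
        using True s6 s_in[OF j5] unfolding bold_def by auto
      ultimately show ?thesis using Phi_u by simp
    next
      case False
      hence j6: "j = 6" and i5: "i \<in> {1..5}" using ij \<open>i = 6 \<or> j = 6\<close> by auto
      have "bold i j = (u_el i :: 'a np)" using j6 i5 unfolding bold_def by auto
      moreover have "bold (Transposition.transpose a b i) (Transposition.transpose a b j) = (u_el (Transposition.transpose a b i) :: 'a np)"
        using j6 s6 s_in[OF i5] unfolding bold_def by auto
      ultimately show ?thesis using Phi_u by simp
    qed
  next
    case False
    hence "i \<in> {1..5}" "j \<in> {1..5}" using ij by auto
    hence "bold i j = (vtx (V i j) :: 'a np)"
      "bold (Transposition.transpose a b i) (Transposition.transpose a b j) = (vtx (V (Transposition.transpose a b i) (Transposition.transpose a b j)) :: 'a np)"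
      using bold_vtx s_in by auto
    thus ?thesis using Phi_vtx[where 'a='a, OF \<open>i \<in> {1..5}\<close> \<open>j \<in> {1..5}\<close> \<open>i \<noteq> j\<close>] by simp
  qed
qed

end

lemma sum14: "(\<Sum>k\<in>{1..4::nat}. f k) = f 1 + f 2 + f 3 + f 4"
proof -
  have "{1..4::nat} = {1,2,3,4}" by auto
  thus ?thesis by (simp add: add.assoc)
qed

lemma vcases: obtains (five) k where "k \<in> {1..4}" "B = V k 5" "Rep_pvert B = {k,5}"
  | (four) i j where "i \<in> {1..4}" "j \<in> {1..4}" "i \<noteq> j" "B = V i j" "Rep_pvert B = {i,j}"
proof -
  obtain i j where ij: "i \<noteq> j" "i \<in> {1..5}" "j \<in> {1..5}" "B = V i j" using pvert_V by blast
  have R: "Rep_pvert B = {i,j}" using ij RepV by simp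
  show ?thesis
  proof (cases "i = 5 \<or> j = 5")
    case True
    thus ?thesis
    proof
      assume i5: "i = 5"
      hence "j \<in> {1..4}" using ij by auto
      moreover have "B = V j 5" using ij i5 by (simp add: V_sym)
      moreover have "Rep_pvert B = {j,5}" using R i5 by auto
      ultimately show ?thesis by (rule five)
    next
      assume j5: "j = 5"
      hence "i \<in> {1..4}" using ij by auto
      moreover have "B = V i 5" using ij j5 by simp
      moreover have "Rep_pvert B = {i,5}" using R j5 by auto
      ultimately show ?thesis by (rule five)
    qed
  next
    case False
    hence "i \<in> {1..4}" "j \<in> {1..4}" using ij by auto
    thus ?thesis using ij(1,4) R by (rule four)
  qed
qed

lemma remaining: assumes "i \<in> {1..4}" "j \<in> {1..4}" "k \<in> {1..4::nat}" "i \<noteq> j" "i \<noteq> k" "j \<noteq> k"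
  obtains m where "m \<in> {1..4}" "m \<noteq> i" "m \<noteq> j" "m \<noteq> k" "{1..4} = {i,j,k,m}"
proof -
  have "card ({1..4::nat} - {i,j,k}) = 1" using assms by (simp add: card_Diff_subset)
  then obtain m where m: "{1..4::nat} - {i,j,k} = {m}" using card_1_singletonE by blast
  hence mm: "m \<in> {1..4::nat} - {i,j,k}" by blast
  hence "m \<in> {1..4}" "m \<noteq> i" "m \<noteq> j" "m \<noteq> k" by blast+
  moreover have "{1..4} = {i,j,k,m}"
  proof
    show "{1..4} \<subseteq> {i,j,k,m}" using m by blast
    show "{i,j,k,m} \<subseteq> {1..4}" using assms mm by blast
  qed
  ultimately show ?thesis using that by blast
qed

lemma ecases: obtains (four) i j k l where "i \<in> {1..4}" "j \<in> {1..4}" "k \<in> {1..4}" "l \<in> {1..4}"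
    "i \<noteq> j" "i \<noteq> k" "i \<noteq> l" "j \<noteq> k" "j \<noteq> l" "k \<noteq> l" "e = E (V i j) (V k l)" "{1..4} = {i,j,k,l}"
  | (five) i j k m where "i \<in> {1..4}" "j \<in> {1..4}" "k \<in> {1..4}" "m \<in> {1..4}"
    "i \<noteq> j" "i \<noteq> k" "i \<noteq> m" "j \<noteq> k" "j \<noteq> m" "k \<noteq> m" "e = E (V i j) (V k 5)" "{1..4} = {i,j,k,m}"
proof -
  obtain A B where AB: "Rep_pvert A \<inter> Rep_pvert B = {}" "e = E A B" using pedge_E by blast
  show ?thesis
  proof (cases A rule: vcases)
    case (five k)
    then show ?thesis
    proof (cases B rule: vcases)
      case f2: (five k') then show ?thesis using five AB by auto
    next
      case (four i j)
      obtain m where "m \<in> {1..4}" "m \<noteq> i" "m \<noteq> j" "m \<noteq> k" "{1..4} = {i,j,k,m}"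
        using remaining[of i j k] four five AB by auto
      then show ?thesis using that(2)[of i j k m] four five AB by (auto simp: E_sym)
    qed
  next
    case (four i j)
    then show ?thesis
    proof (cases B rule: vcases)
      case (five k)
      obtain m where "m \<in> {1..4}" "m \<noteq> i" "m \<noteq> j" "m \<noteq> k" "{1..4} = {i,j,k,m}"
        using remaining[of i j k] four five AB by auto
      then show ?thesis using that(2)[of i j k m] four five AB by auto
    next
      case f2: (four k l)
      have "{i,j} \<inter> {k,l} = {}" using four f2 AB by auto
      moreover have "{i,j,k,l} \<subseteq> {1..4}" using four f2 by auto
      moreover have "card {i,j,k,l} = 4" using calculation four f2 by auto
      ultimately have "{1..4} = {i,j,k,l}" by (intro card_subset_eq[symmetric]) auto
      then show ?thesis using that(1)[of i j k l] four f2 AB \<open>{i,j} \<inter> {k,l} = {}\<close> by auto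
    qed
  qed
qed

definition tX :: "(pvert \<Rightarrow> 'a::field) \<Rightarrow> 'a" where "tX v = (\<Sum>k\<in>{1..4}. v (V k 5))"

definition tU :: "(pvert \<Rightarrow> 'a::field) \<Rightarrow> pvert \<Rightarrow> 'a" where
  "tU v = (\<lambda>B. if 5 \<in> Rep_pvert B then tX v / 2 - v B else v B + tX v / 2 - (\<Sum>x\<in>Rep_pvert B. v (V x 5)))"

definition tg :: "pedge \<Rightarrow> pvert \<Rightarrow> pvert" where
  "tg e A = (if 5 \<in> Rep_pvert A then Abs_pvert (insert 5 ({1..5} - \<Union>(Rep_pvert ` Rep_pedge e))) else A)"

definition tP :: "pedge \<Rightarrow> pedge" where "tP e = Abs_pedge (tg e ` Rep_pedge e)"

lemma half: "(2::'a::field) \<noteq> 0 \<Longrightarrow> (x::'a) / 2 + x / 2 = x"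
  by (simp add: field_simps)

lemma RV4: "i \<in> {1..4} \<Longrightarrow> j \<in> {1..4} \<Longrightarrow> i \<noteq> j \<Longrightarrow> Rep_pvert (V i j) = {i,j}" by (simp add: RepV)
lemma RV5: "k \<in> {1..4} \<Longrightarrow> Rep_pvert (V k 5) = {k,5}" by (simp add: RepV)

lemma tU_5: "k \<in> {1..4} \<Longrightarrow> tU v (V k 5) = tX v / 2 - v (V k 5)"
  unfolding tU_def by (simp add: RV5)

lemma tU_4: "i \<in> {1..4} \<Longrightarrow> j \<in> {1..4} \<Longrightarrow> i \<noteq> j \<Longrightarrow>
  tU v (V i j) = v (V i j) + tX v / 2 - v (V i 5) - v (V j 5)"
  unfolding tU_def by (auto simp: RV4)

lemma tX_4: "{1..4} = {i,j,k,m::nat} \<Longrightarrow> i \<noteq> j \<Longrightarrow> i \<noteq> k \<Longrightarrow> i \<noteq> m \<Longrightarrow> j \<noteq> k \<Longrightarrow> j \<noteq> m \<Longrightarrow> k \<noteq> m \<Longrightarrow>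
   tX v = v (V i 5) + v (V j 5) + v (V k 5) + v (V m 5)"
  unfolding tX_def by (simp add: add.assoc)

lemma tP_four: assumes "i \<in> {1..4}" "j \<in> {1..4}" "k \<in> {1..4}" "l \<in> {1..4}"
    "i \<noteq> j" "i \<noteq> k" "i \<noteq> l" "j \<noteq> k" "j \<noteq> l" "k \<noteq> l"
  shows "tP (E (V i j) (V k l)) = E (V i j) (V k l)"
proof -
  have d: "Rep_pvert (V i j) \<inter> Rep_pvert (V k l) = {}" using assms by (simp add: RV4)
  have "tg (E (V i j) (V k l)) ` Rep_pedge (E (V i j) (V k l)) = Rep_pedge (E (V i j) (V k l))"
    using assms RepE[OF d] unfolding tg_def by (auto simp: RV4)
  thus ?thesis unfolding tP_def by (simp add: Rep_pedge_inverse)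
qed

lemma tP_five: assumes "i \<in> {1..4}" "j \<in> {1..4}" "k \<in> {1..4}" "m \<in> {1..4}"
    "i \<noteq> j" "i \<noteq> k" "i \<noteq> m" "j \<noteq> k" "j \<noteq> m" "k \<noteq> m" "{1..4} = {i,j,k,m}"
  shows "tP (E (V i j) (V k 5)) = E (V i j) (V m 5)"
proof -
  have d: "Rep_pvert (V i j) \<inter> Rep_pvert (V k 5) = {}" using assms by (auto simp: RV4 RV5)
  have R: "Rep_pedge (E (V i j) (V k 5)) = {V i j, V k 5}" using RepE[OF d] .
  have U: "\<Union>(Rep_pvert ` {V i j, V k 5}) = {i,j,k,5}" using assms by (auto simp: RV4 RV5)
  have "{1..5::nat} = insert 5 {1..4}" by auto
  hence "{1..5::nat} - {i,j,k,5} = {m}" using assms by auto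
  hence "insert 5 ({1..5} - \<Union>(Rep_pvert ` Rep_pedge (E (V i j) (V k 5)))) = {m,5}" using R U by auto
  hence "tg (E (V i j) (V k 5)) (V k 5) = V m 5" unfolding tg_def V_def using assms
    by (simp add: RV5[unfolded V_def])
  moreover have "tg (E (V i j) (V k 5)) (V i j) = V i j" unfolding tg_def using assms by (simp add: RV4)
  ultimately have "tg (E (V i j) (V k 5)) ` Rep_pedge (E (V i j) (V k 5)) = {V i j, V m 5}" using R by simp
  thus ?thesis unfolding tP_def E_def by simp
qed

lemma d4: "i \<in> {1..4} \<Longrightarrow> j \<in> {1..4} \<Longrightarrow> k \<in> {1..4} \<Longrightarrow> l \<in> {1..4} \<Longrightarrow>
    i \<noteq> k \<Longrightarrow> i \<noteq> l \<Longrightarrow> j \<noteq> k \<Longrightarrow> j \<noteq> l \<Longrightarrow> i \<noteq> j \<Longrightarrow> k \<noteq> l \<Longrightarrow> Rep_pvert (V i j) \<inter> Rep_pvert (V k l) = {}"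
  by (simp add: RV4)
lemma d5: "i \<in> {1..4} \<Longrightarrow> j \<in> {1..4} \<Longrightarrow> k \<in> {1..4} \<Longrightarrow>
    i \<noteq> k \<Longrightarrow> j \<noteq> k \<Longrightarrow> i \<noteq> j \<Longrightarrow> Rep_pvert (V i j) \<inter> Rep_pvert (V k 5) = {}"
  by (auto simp: RV4 RV5)

lemma tP_tP: "tP (tP e) = e"
proof (cases e rule: ecases)
  case (four i j k l)
  thus ?thesis using tP_four by simp
next
  case (five i j k m)
  have "{1..4} = {i,j,m,k}" using five by auto
  thus ?thesis using five tP_five[of i j k m] tP_five[of i j m k] by auto
qed

lemma sv_tU: assumes two: "(2::'a::field) \<noteq> 0" shows "sv (tU (v :: pvert \<Rightarrow> 'a)) e = sv v (tP e)"
proof (cases e rule: ecases)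
  case (four i j k l)
  have X: "tX v = v (V i 5) + v (V j 5) + v (V k 5) + v (V l 5)" using four by (intro tX_4) auto
  have "sv (tU v) e = tU v (V i j) + tU v (V k l)" using four by (simp add: sv_E d4)
  also have "\<dots> = v (V i j) + v (V k l) + (tX v / 2 + tX v / 2) - v (V i 5) - v (V j 5) - v (V k 5) - v (V l 5)"
    using four by (simp add: tU_4 algebra_simps)
  also have "\<dots> = v (V i j) + v (V k l)" by (simp add: half[OF two] X algebra_simps)
  also have "\<dots> = sv v (tP e)" using four by (simp add: sv_E d4 tP_four)
  finally show ?thesis .
next
  case (five i j k m)
  have X: "tX v = v (V i 5) + v (V j 5) + v (V k 5) + v (V m 5)" using five by (intro tX_4) auto
  have "sv (tU v) e = tU v (V i j) + tU v (V k 5)" using five by (simp add: sv_E d5)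
  also have "\<dots> = v (V i j) + (tX v / 2 + tX v / 2) - v (V i 5) - v (V j 5) - v (V k 5)"
    using five by (simp add: tU_4 tU_5 algebra_simps)
  also have "\<dots> = v (V i j) + v (V m 5)" by (simp add: half[OF two] X algebra_simps)
  also have "\<dots> = sv v (tP e)"
  proof -
    have "tP e = E (V i j) (V m 5)" using tP_five[OF five(1-10) five(12)] five(11) by simp
    moreover have "Rep_pvert (V i j) \<inter> Rep_pvert (V m 5) = {}" using five by (intro d5) auto
    ultimately show ?thesis by (simp add: sv_E)
  qed
  finally show ?thesis .
qed

lemma tX_expand: "tX v = v (V 1 5) + v (V 2 5) + v (V 3 5) + v (V 4 5)"
  unfolding tX_def by (rule sum14)

lemma tX_tU: assumes two: "(2::'a::field) \<noteq> 0" shows "tX (tU (v :: pvert \<Rightarrow> 'a)) = tX v"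
proof -
  have "tX (tU v) = tU v (V 1 5) + tU v (V 2 5) + tU v (V 3 5) + tU v (V 4 5)" unfolding tX_def sum14 ..
  also have "\<dots> = (tX v / 2 + tX v / 2) + (tX v / 2 + tX v / 2) - (v (V 1 5) + v (V 2 5) + v (V 3 5) + v (V 4 5))"
    by (simp add: tU_5 algebra_simps)
  also have "\<dots> = tX v + tX v - (v (V 1 5) + v (V 2 5) + v (V 3 5) + v (V 4 5))" by (simp only: half[OF two])
  also have "\<dots> = tX v" by (simp add: tX_expand)
  finally show ?thesis .
qed

lemma tU_tU: assumes two: "(2::'a::field) \<noteq> 0" shows "tU (tU (v :: pvert \<Rightarrow> 'a)) = v"
proof
  fix B show "tU (tU v) B = v B"
  proof (cases B rule: vcases)
    case (five k)
    thus ?thesis by (simp add: tU_5 tX_tU[OF two])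
  next
    case (four i j)
    have "tU (tU v) B = tU v (V i j) + tX v / 2 - tU v (V i 5) - tU v (V j 5)"
      using four by (simp add: tU_4 tX_tU[OF two])
    also have "\<dots> = v (V i j) + (tX v / 2 + tX v / 2) - (tX v / 2 + tX v / 2)"
      using four by (simp add: tU_4 tU_5 algebra_simps)
    finally show ?thesis using four by simp
  qed
qed

lemma tU_add: "tU (\<lambda>A. v A + w A) = (\<lambda>A. tU v A + tU w A)"
  unfolding tU_def tX_def by (auto simp: sum.distrib algebra_simps add_divide_distrib fun_eq_iff)

lemma tU_scale: "tU (\<lambda>A. c * v A) = (\<lambda>A. c * tU v A)"
  unfolding tU_def tX_def by (auto simp: sum_distrib_left[symmetric] algebra_simps fun_eq_iff)

definition Tau :: "'a::field np \<Rightarrow> 'a np" where "Tau x = (tU (fst x), snd x \<circ> tP)"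

lemma Tau_aut: assumes "(2::'a::field) \<noteq> 0" shows "(Tau :: 'a np \<Rightarrow> 'a np) \<in> autNP"
  unfolding Tau_def
  by (rule mkaut) (simp_all add: tU_add tU_scale tU_tU[OF assms] tP_tP sv_tU[OF assms])

lemma Tau_Tau: assumes "(2::'a::field) \<noteq> 0" shows "Tau (Tau (x :: 'a np)) = x"
  unfolding Tau_def by (simp add: tU_tU[OF assms] tP_tP o_def)

lemma V5_eq: "k \<in> {1..4} \<Longrightarrow> i \<in> {1..4} \<Longrightarrow> (V k 5 = V i 5) = (k = i)"
  by (subst V_eq) (auto simp: doubleton_eq_iff)

lemma V5_neq4: "k \<in> {1..4} \<Longrightarrow> i \<in> {1..4} \<Longrightarrow> j \<in> {1..4} \<Longrightarrow> i \<noteq> j \<Longrightarrow> V k 5 \<noteq> V i j"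
  by (subst V_eq) (auto simp: doubleton_eq_iff)

lemma sum2: "Rep_pvert B = {i,j} \<Longrightarrow> i \<noteq> j \<Longrightarrow> (\<Sum>x\<in>Rep_pvert B. f x) = f i + f j" by simp

lemma fst_vtx: "fst (vtx A :: 'a::field np) = (\<lambda>B. if B = A then 1 else 0)" unfolding vtx_def by simp
lemma snd_vtx: "snd (vtx A :: 'a::field np) = (\<lambda>_. 0)" unfolding vtx_def by simp
lemma snd_u: "snd (u_el i :: 'a::field np) = (\<lambda>_. 0)" unfolding u_el_def by simp
lemma fst_u: "fst (u_el i :: 'a::field np) = (\<lambda>B. if i \<in> Rep_pvert B then - (1/2) else 1/2)" unfolding u_el_def by simp

lemma tX_num: "tX v = v (V 1 5) + v (V 2 5) + v (V 3 5) + v (V 4 5)" by (rule tX_expand)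

lemma Tau_vtx4: assumes "i \<in> {1..4}" "j \<in> {1..4}" "i \<noteq> j"
  shows "Tau (vtx (V i j) :: 'a::field np) = vtx (V i j)"
proof -
  have X: "tX (fst (vtx (V i j) :: 'a np)) = 0"
    unfolding tX_def fst_vtx using V5_neq4[OF _ assms] by simp
  have "tU (fst (vtx (V i j) :: 'a np)) B = fst (vtx (V i j) :: 'a np) B" for B
  proof (cases B rule: vcases)
    case (five k)
    thus ?thesis using X V5_neq4[OF _ assms] by (simp add: tU_5 fst_vtx)
  next
    case (four i' j')
    thus ?thesis using X V5_neq4[OF _ assms] by (simp add: tU_def fst_vtx RV4)
  qed
  thus ?thesis unfolding Tau_def by (simp add: fun_eq_iff snd_vtx o_def vtx_def)
qed

lemma Tau_vtx5: assumes two: "(2::'a::field) \<noteq> 0" and i: "i \<in> {1..4}"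
  shows "Tau (vtx (V i 5) :: 'a np) = u_el i"
proof -
  have X: "tX (fst (vtx (V i 5) :: 'a np)) = 1"
    using i unfolding tX_num fst_vtx by (auto simp: V5_eq)
  have "tU (fst (vtx (V i 5) :: 'a np)) B = fst (u_el i :: 'a np) B" for B
  proof (cases B rule: vcases)
    case (five k)
    thus ?thesis using X i two by (auto simp: tU_5 fst_vtx fst_u V5_eq field_simps)
  next
    case (four i' j')
    thus ?thesis using X i two V5_neq4[OF i four(1-3)] by (auto simp: tU_def fst_vtx fst_u RV4 V5_eq field_simps)
  qed
  thus ?thesis unfolding Tau_def by (simp add: fun_eq_iff snd_vtx snd_u o_def u_el_def)
qed

lemma Tau_u: assumes two: "(2::'a::field) \<noteq> 0" and i: "i \<in> {1..4}"
  shows "Tau (u_el i :: 'a np) = vtx (V i 5)"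
  using Tau_Tau[OF two] Tau_vtx5[OF two i] by metis

lemma Tau_u5: assumes two: "(2::'a::field) \<noteq> 0" shows "Tau (u_el 5 :: 'a np) = u_el 5"
proof -
  have r: "Rep_pvert (V 1 5) = {1,5}" "Rep_pvert (V 2 5) = {2,5}" "Rep_pvert (V 3 5) = {3,5}" "Rep_pvert (V 4 5) = {4,5}"
    by (simp_all add: RV5)
  have X: "tX (fst (u_el 5 :: 'a np)) = - 2" using two unfolding tX_num fst_u r by (simp add: field_simps)
  have "tU (fst (u_el 5 :: 'a np)) B = fst (u_el 5 :: 'a np) B" for B
  proof (cases B rule: vcases)
    case (five k)
    thus ?thesis using X two by (auto simp: tU_5 fst_u field_simps)
  next
    case (four i' j')
    thus ?thesis using X two by (auto simp: tU_def fst_u RV4 RV5 field_simps)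
  qed
  thus ?thesis unfolding Tau_def by (simp add: fun_eq_iff snd_u o_def u_el_def)
qed

lemma Tau_BP: assumes two: "(2::'a::field) \<noteq> 0"
  shows "BP (Tau :: 'a np \<Rightarrow> 'a np) (Transposition.transpose 5 6)"
  unfolding BP_def
proof (intro conjI ballI impI)
  show "(Tau :: 'a np \<Rightarrow> 'a np) \<in> autNP" using Tau_aut[OF two] .
  show "Transposition.transpose (5::nat) 6 permutes {1..6}" by (auto intro: permutes_swap_id)
  fix i j :: nat assume ij: "i \<in> {1..6}" "j \<in> {1..6}" "i \<noteq> j"
  let ?t = "Transposition.transpose (5::nat) 6"
  have c: "i \<in> {1..4} \<or> i = 5 \<or> i = 6" "j \<in> {1..4} \<or> j = 5 \<or> j = 6" using ij by auto
  have b4: "k \<in> {1..4} \<Longrightarrow> l \<in> {1..4} \<Longrightarrow> bold k l = (vtx (V k l) :: 'a np)" for k l by (simp add: bold_vtx)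
  have b5: "k \<in> {1..4} \<Longrightarrow> bold k 5 = (vtx (V k 5) :: 'a np)" "k \<in> {1..4} \<Longrightarrow> bold 5 k = (vtx (V k 5) :: 'a np)" for k
    by (simp_all add: bold_vtx V_sym)
  have b6: "k \<in> {1..5} \<Longrightarrow> bold k 6 = (u_el k :: 'a np)" "k \<in> {1..5} \<Longrightarrow> bold 6 k = (u_el k :: 'a np)" for k
    by (simp_all add: bold_u)
  have t4: "k \<in> {1..4} \<Longrightarrow> ?t k = k" for k by auto
  show "Tau (bold i j :: 'a np) = bold (?t i) (?t j)"
    using c ij(3)
  proof (elim disjE)
  qed (auto simp: b4 b5 b6 t4 Tau_vtx4 Tau_vtx5[OF two] Tau_u[OF two] Tau_u5[OF two])
qed

lemma trans_BP: assumes two: "(2::'a::field) \<noteq> 0" and ab: "a \<in> {1..6}" "b \<in> {1..6}" "a \<noteq> b"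
  shows "\<exists>\<psi> :: 'a np \<Rightarrow> 'a np. BP \<psi> (Transposition.transpose a b)"
proof -
  have main: "\<exists>\<psi> :: 'a np \<Rightarrow> 'a np. BP \<psi> (Transposition.transpose a b)" if "a < b" "a \<in> {1..6}" "b \<in> {1..6}" for a b
  proof (cases "b \<le> 5")
    case True
    hence "a \<in> {1..5}" "b \<in> {1..5}" using that by auto
    thus ?thesis using Phi_BP by blast
  next
    case False
    hence b6: "b = 6" using that by auto
    show ?thesis
    proof (cases "a = 5")
      case True thus ?thesis using Tau_BP[OF two] b6 by blast
    next
      case False
      hence a4: "a \<in> {1..5}" "a \<noteq> 5" using that b6 by auto
      have "BP ((Phi a 5 \<circ> Tau) \<circ> Phi a 5 :: 'a np \<Rightarrow> 'a np)
              ((Transposition.transpose a 5 \<circ> Transposition.transpose 5 6) \<circ> Transposition.transpose a 5)"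
        using a4 by (intro BP_comp Phi_BP Tau_BP[OF two]) auto
      moreover have "(Transposition.transpose a 5 \<circ> Transposition.transpose 5 6) \<circ> Transposition.transpose a 5
         = Transposition.transpose a (6::nat)"
        using transpose_comp_triple[of a 6 5] a4 by simp
      ultimately show ?thesis using b6 by metis
    qed
  qed
  show ?thesis
  proof (cases "a < b")
    case True thus ?thesis using main ab by blast
  next
    case False
    hence "b < a" using ab by auto
    thus ?thesis using main[of b a] ab by (simp add: transpose_commute)
  qed
qed

lemma np_scale_1: "np_scale 1 x = x" unfolding np_scale_def by simp
lemma np_scale_scale: "np_scale c (np_scale d x) = np_scale (c * d) x" unfolding np_scale_def by (simp add: mult.assoc)

lemma span1_self: "x \<in> span1 x" unfolding span1_def using np_scale_1[of x, symmetric] by blast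

lemma span1_eq: "span1 x = span1 y \<Longrightarrow> \<exists>c. x = np_scale c y"
  using span1_self unfolding span1_def by blast

lemma span1_scale: "(c::'a::field) \<noteq> 0 \<Longrightarrow> span1 (np_scale c x) = span1 x"
  unfolding span1_def
proof (auto simp: np_scale_scale)
  fix d assume "c \<noteq> 0"
  hence "np_scale d x = np_scale ((d / c) * c) x" by simp
  thus "\<exists>e. np_scale d x = np_scale (e * c) x" by blast
qed

lemma span1_range: "span1 x = range (\<lambda>c. np_scale c x)" unfolding span1_def by auto

lemma lin_span1: assumes "linmap \<phi>" shows "\<phi> ` span1 x = span1 (\<phi> x)"
proof -
  have h: "\<phi> (np_scale c x) = np_scale c (\<phi> x)" for c using assms unfolding linmap_def by blast
  show ?thesis unfolding span1_range image_image h ..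
qed

definition pat :: "nat \<Rightarrow> nat \<Rightarrow> pedge \<Rightarrow> bool" where
  "pat i j e = (if i \<le> 5 \<and> j \<le> 5 then V i j \<in> Rep_pedge e else if j = 6 then avoid e i else avoid e j)"

lemma sv_u: assumes two: "(2::'a::field) \<noteq> 0"
  shows "sv (fst (u_el i :: 'a np)) e = (if avoid e i then 1 else 0)"
proof -
  obtain A B where AB: "Rep_pvert A \<inter> Rep_pvert B = {}" "e = E A B" using pedge_E by blast
  have R: "Rep_pedge e = {A,B}" using AB RepE by simp
  have "sv (fst (u_el i :: 'a np)) e = fst (u_el i :: 'a np) A + fst (u_el i :: 'a np) B" using AB sv_E by simp
  thus ?thesis using AB(1) R two unfolding avoid_def fst_u by (auto simp: field_simps)
qed

lemma sv_bold: assumes two: "(2::'a::field) \<noteq> 0" and ij: "i \<in> {1..6}" "j \<in> {1..6}" "i \<noteq> j"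
  shows "sv (fst (bold i j :: 'a np)) e = (if pat i j e then 1 else 0)"
  using ij unfolding pat_def bold_def by (auto simp: sv_vtx sv_u[OF two] V_def)

lemma pat_sym: "i \<in> {1..6} \<Longrightarrow> j \<in> {1..6} \<Longrightarrow> i \<noteq> j \<Longrightarrow> pat i j e = pat j i e"
  unfolding pat_def by (auto simp: V_sym)

lemma avoid_V: "avoid e k \<Longrightarrow> V i j \<in> Rep_pedge e \<Longrightarrow> i \<in> {1..5} \<Longrightarrow> j \<in> {1..5} \<Longrightarrow> i \<noteq> j \<Longrightarrow> k \<noteq> i \<and> k \<noteq> j"
  unfolding avoid_def using RepV by fastforce

lemma two_V: assumes "V i j \<in> Rep_pedge e" "V k l \<in> Rep_pedge e" "{i,j} \<noteq> {k,l}"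
  "i \<in> {1..5}" "j \<in> {1..5}" "k \<in> {1..5}" "l \<in> {1..5}" "i \<noteq> j" "k \<noteq> l"
  shows "{i,j} \<inter> {k,l} = {}"
proof -
  obtain A B where AB: "Rep_pvert A \<inter> Rep_pvert B = {}" "e = E A B" using pedge_E by blast
  have R: "Rep_pedge e = {A,B}" using AB RepE by simp
  have ne: "V i j \<noteq> V k l" using assms V_eq by metis
  hence "{V i j, V k l} = {A,B}" using assms(1,2) R by auto
  hence "Rep_pvert (V i j) \<inter> Rep_pvert (V k l) = {}" using AB(1) by (auto simp: doubleton_eq_iff Int_commute)
  thus ?thesis using assms RepV by simp
qed

lemma pat_norm: assumes "i \<in> {1..6}" "j \<in> {1..6}" "i \<noteq> j" "pat i j e"
  shows "\<exists>i' j'. {i',j'} = {i,j} \<and> pat i' j' e \<and> (j' = 6 \<or> (i' \<le> 5 \<and> j' \<le> 5))"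
proof (cases "i = 6")
  case True
  hence "pat j i e" using assms pat_sym by metis
  thus ?thesis using True by (intro exI[of _ j] exI[of _ i]) (auto simp: insert_commute)
next
  case False
  hence "j = 6 \<or> (i \<le> 5 \<and> j \<le> 5)" using assms by auto
  thus ?thesis using assms by blast
qed

lemma P1: assumes "i \<in> {1..6}" "j \<in> {1..6}" "k \<in> {1..6}" "l \<in> {1..6}" "i \<noteq> j" "k \<noteq> l" "{i,j} \<noteq> {k,l}"
  "pat i j e" "pat k l e"
  shows "{i,j} \<inter> {k,l} = {}"
proof -
  have c1: "{i,j} \<inter> {k,l} = {}" if "i \<in> {1..6}" "j \<in> {1..6}" "k \<in> {1..6}" "l \<in> {1..6}" "i \<noteq> j" "k \<noteq> l" "{i,j} \<noteq> {k,l}"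
    "pat i j e" "pat k l e" "j = 6 \<or> (i \<le> 5 \<and> j \<le> 5)" "l = 6 \<or> (k \<le> 5 \<and> l \<le> 5)" for i j k l
  proof -
    note h = that
    consider (a) "i \<le> 5" "j \<le> 5" "k \<le> 5" "l \<le> 5" | (b) "i \<le> 5" "j \<le> 5" "l = 6" | (c) "j = 6" "k \<le> 5" "l \<le> 5" | (d) "j = 6" "l = 6"
      using h(10,11) by blast
    then show ?thesis
    proof cases
      case a thus ?thesis using h two_V unfolding pat_def by auto
    next
      case b thus ?thesis using h avoid_V[of e k i j] unfolding pat_def by auto
    next
      case c thus ?thesis using h avoid_V[of e i k l] unfolding pat_def by auto
    next
      case d thus ?thesis using h avoid_unique[of e i k] unfolding pat_def by auto
    qed
  qed
  have n1: "\<exists>i' j'. {i',j'} = {i,j} \<and> pat i' j' e \<and> (j' = 6 \<or> (i' \<le> 5 \<and> j' \<le> 5))"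
    using assms pat_norm by blast
  have n2: "\<exists>k' l'. {k',l'} = {k,l} \<and> pat k' l' e \<and> (l' = 6 \<or> (k' \<le> 5 \<and> l' \<le> 5))"
    using assms pat_norm by blast
  from n1 obtain i' j' where eq1: "{i',j'} = {i,j}" and p1: "pat i' j' e" "j' = 6 \<or> (i' \<le> 5 \<and> j' \<le> 5)"
    by blast
  from n2 obtain k' l' where eq2: "{k',l'} = {k,l}" and p2: "pat k' l' e" "l' = 6 \<or> (k' \<le> 5 \<and> l' \<le> 5)"
    by blast
  have m: "i' \<in> {i,j}" "j' \<in> {i,j}" "k' \<in> {k,l}" "l' \<in> {k,l}" using eq1 eq2 by blast+
  have "i' \<noteq> j'" using eq1 assms(5) by (metis insert_absorb2 doubleton_eq_iff)
  moreover have "k' \<noteq> l'" using eq2 assms(6) by (metis insert_absorb2 doubleton_eq_iff)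
  moreover have "i' \<in> {1..6}" "j' \<in> {1..6}" "k' \<in> {1..6}" "l' \<in> {1..6}" using m assms(1-4) by blast+
  moreover have "{i',j'} \<noteq> {k',l'}" using eq1 eq2 assms(7) by simp
  ultimately have "{i',j'} \<inter> {k',l'} = {}" using c1 p1 p2 by blast
  thus ?thesis using eq1 eq2 by simp
qed

lemma pat_norm2: assumes "i \<in> {1..6}" "j \<in> {1..6}" "i \<noteq> j"
  shows "\<exists>i' j'. {i',j'} = {i,j} \<and> (\<forall>e. pat i' j' e = pat i j e) \<and> i' \<in> {1..5} \<and> j' \<in> {1..6} \<and> i' \<noteq> j'"
proof (cases "i = 6")
  case True
  thus ?thesis using assms pat_sym[of j i] by (intro exI[of _ j] exI[of _ i]) (auto simp: insert_commute)
next
  case False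
  hence "i \<in> {1..5}" using assms by auto
  thus ?thesis using assms by (intro exI[of _ i] exI[of _ j]) auto
qed

lemma P2a: assumes "i \<in> {1..5}" "j \<in> {1..6}" "k \<in> {1..5}" "l \<in> {1..6}" "i \<noteq> j" "k \<noteq> l" "{i,j} \<inter> {k,l} = {}"
  shows "\<exists>e. pat i j e \<and> pat k l e"
proof -
  consider (a) "j \<le> 5" "l \<le> 5" | (b) "j \<le> 5" "l = 6" | (c) "j = 6" "l \<le> 5" | (d) "j = 6" "l = 6"
    using assms by fastforce
  then show ?thesis
  proof cases
    case a
    have d: "Rep_pvert (V i j) \<inter> Rep_pvert (V k l) = {}" using a assms by (simp add: RepV)
    show ?thesis using RepE[OF d] a assms unfolding pat_def by (intro exI[of _ "E (V i j) (V k l)"]) auto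
  next
    case b
    have "card ({1..5::nat} - {i,j,k}) = 2" using assms b by (simp add: card_Diff_subset)
    then obtain p q where pq: "{1..5::nat} - {i,j,k} = {p,q}" "p \<noteq> q" using card_2_iff by metis
    have pq': "p \<in> {1..5}" "q \<in> {1..5}" "p \<notin> {i,j,k}" "q \<notin> {i,j,k}" using pq(1) by blast+
    have d: "Rep_pvert (V i j) \<inter> Rep_pvert (V p q) = {}" using b assms pq' pq(2) by (simp add: RepV)
    have "avoid (E (V i j) (V p q)) k" unfolding avoid_def using RepE[OF d] b assms pq' pq(2) by (auto simp: RepV)
    thus ?thesis using RepE[OF d] b assms unfolding pat_def by (intro exI[of _ "E (V i j) (V p q)"]) auto
  next
    case c
    have "card ({1..5::nat} - {k,l,i}) = 2" using assms c by (simp add: card_Diff_subset)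
    then obtain p q where pq: "{1..5::nat} - {k,l,i} = {p,q}" "p \<noteq> q" using card_2_iff by metis
    have pq': "p \<in> {1..5}" "q \<in> {1..5}" "p \<notin> {k,l,i}" "q \<notin> {k,l,i}" using pq(1) by blast+
    have d: "Rep_pvert (V k l) \<inter> Rep_pvert (V p q) = {}" using c assms pq' pq(2) by (simp add: RepV)
    have "avoid (E (V k l) (V p q)) i" unfolding avoid_def using RepE[OF d] c assms pq' pq(2) by (auto simp: RepV)
    thus ?thesis using RepE[OF d] c assms unfolding pat_def by (intro exI[of _ "E (V k l) (V p q)"]) auto
  next
    case d thus ?thesis using assms by auto
  qed
qed

lemma P2: assumes "i \<in> {1..6}" "j \<in> {1..6}" "k \<in> {1..6}" "l \<in> {1..6}" "i \<noteq> j" "k \<noteq> l" "{i,j} \<inter> {k,l} = {}"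
  shows "\<exists>e. pat i j e \<and> pat k l e"
proof -
  from pat_norm2[OF assms(1,2,5)] obtain i' j' where a: "{i',j'} = {i,j}" "\<forall>e. pat i' j' e = pat i j e"
    "i' \<in> {1..5}" "j' \<in> {1..6}" "i' \<noteq> j'" by blast
  from pat_norm2[OF assms(3,4,6)] obtain k' l' where b: "{k',l'} = {k,l}" "\<forall>e. pat k' l' e = pat k l e"
    "k' \<in> {1..5}" "l' \<in> {1..6}" "k' \<noteq> l'" by blast
  have "\<exists>e. pat i' j' e \<and> pat k' l' e" using a b assms(7) by (intro P2a) auto
  thus ?thesis using a b by auto
qed

lemma P3: assumes "i \<in> {1..6}" "j \<in> {1..6}" "k \<in> {1..6}" "l \<in> {1..6}" "i \<noteq> j" "k \<noteq> l" "{i,j} \<noteq> {k,l}"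
  shows "\<exists>e. pat i j e \<and> \<not> pat k l e"
proof (cases "{i,j} \<inter> {k,l} = {}")
  case False
  have "card ({1..6::nat} - {i,j}) = 4" using assms by (simp add: card_Diff_subset)
  hence "\<not> card ({1..6::nat} - {i,j}) \<le> Suc 0" by simp
  hence "\<not> (\<forall>a\<in>{1..6::nat} - {i,j}. \<forall>b\<in>{1..6::nat} - {i,j}. a = b)"
    using card_le_Suc0_iff_eq[of "{1..6::nat} - {i,j}"] by simp
  then obtain p q where pq: "p \<in> {1..6::nat} - {i,j}" "q \<in> {1..6::nat} - {i,j}" "p \<noteq> q"
    by blast
  obtain e where e: "pat i j e" "pat p q e" using P2[of i j p q] pq assms by auto
  have "\<not> pat k l e"
  proof
    assume "pat k l e"
    hence "{i,j} \<inter> {k,l} = {}" using P1[of i j k l e] e assms by blast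
    thus False using False by simp
  qed
  thus ?thesis using e by blast
next
  case True
  have "card ({1..6::nat} - {i,j,k,l}) = 2" using assms True by (simp add: card_Diff_subset)
  then obtain g where g: "g \<in> {1..6::nat} - {i,j,k,l}" using card_2_iff by (metis insertI1)
  obtain e where e: "pat i j e" "pat k g e" using P2[of i j k g] g assms True by auto
  have "\<not> pat k l e"
  proof
    assume "pat k l e"
    hence "{k,l} \<inter> {k,g} = {}" using P1[of k l k g e] e g assms by (auto simp: doubleton_eq_iff)
    thus False by simp
  qed
  thus ?thesis using e by blast
qed

lemma sv_scale: "sv (\<lambda>A. c * v A) e = c * sv v e" unfolding sv_def by (simp add: sum_distrib_left)

lemma F1: assumes two: "(2::'a::field) \<noteq> 0" and ij: "i \<in> {1..6}" "j \<in> {1..6}" "k \<in> {1..6}" "l \<in> {1..6}" "i \<noteq> j" "k \<noteq> l"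
  and eq: "(bold i j :: 'a np) = np_scale c (bold k l)"
  shows "{i,j} = {k,l}"
proof (rule ccontr)
  assume "{i,j} \<noteq> {k,l}"
  then obtain e where e: "pat i j e" "\<not> pat k l e" using P3 ij by blast
  have "sv (fst (bold i j :: 'a np)) e = c * sv (fst (bold k l :: 'a np)) e"
    using eq sv_scale[of c "fst (bold k l :: 'a np)" e] unfolding np_scale_def by simp
  thus False using e sv_bold[OF two] ij by simp
qed

lemma F2: assumes two: "(2::'a::field) \<noteq> 0" and ij: "i \<in> {1..6}" "j \<in> {1..6}" "k \<in> {1..6}" "l \<in> {1..6}" "i \<noteq> j" "k \<noteq> l"
    "{i,j} \<noteq> {k,l}"
  shows "(np_mult (bold i j) (bold k l) = (npz :: 'a np)) = ({i,j} \<inter> {k,l} \<noteq> {})"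
proof -
  have "(np_mult (bold i j) (bold k l) = (npz :: 'a np)) = (\<forall>e. \<not> (pat i j e \<and> pat k l e))"
    unfolding np_mult_sv npz_def using sv_bold[OF two] ij by (auto simp: fun_eq_iff)
  also have "\<dots> = ({i,j} \<inter> {k,l} \<noteq> {})"
  proof
    assume h: "\<forall>e. \<not> (pat i j e \<and> pat k l e)"
    show "{i,j} \<inter> {k,l} \<noteq> {}"
    proof
      assume "{i,j} \<inter> {k,l} = {}"
      then obtain e where "pat i j e" "pat k l e" using P2[OF ij(1-6)] by blast
      thus False using h by blast
    qed
  next
    assume h: "{i,j} \<inter> {k,l} \<noteq> {}"
    show "\<forall>e. \<not> (pat i j e \<and> pat k l e)"
    proof (intro allI notI)
      fix e assume "pat i j e \<and> pat k l e"
      hence "{i,j} \<inter> {k,l} = {}" using P1[OF ij] by blast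
      thus False using h by blast
    qed
  qed
  finally show ?thesis .
qed

lemma star: assumes fin: "finite S" and c4: "card S \<ge> 4" and two: "\<forall>D\<in>S. \<exists>a b. a \<noteq> b \<and> D = {a,b}"
  and int: "\<forall>D\<in>S. \<forall>D'\<in>S. D \<inter> D' \<noteq> {}"
  shows "\<exists>k. \<forall>D\<in>S. k \<in> D"
proof (rule ccontr)
  assume nk: "\<not> (\<exists>k. \<forall>D\<in>S. k \<in> D)"
  have "S \<noteq> {}" using c4 by auto
  then obtain D0 where D0: "D0 \<in> S" by blast
  then obtain a b where ab: "a \<noteq> b" "D0 = {a,b}" using two by blast
  obtain D1 where D1: "D1 \<in> S" "a \<notin> D1" using nk by blast
  obtain D2 where D2: "D2 \<in> S" "b \<notin> D2" using nk by blast
  obtain x1 y1 where xy1: "x1 \<noteq> y1" "D1 = {x1,y1}" using two D1 by blast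
  obtain x2 y2 where xy2: "x2 \<noteq> y2" "D2 = {x2,y2}" using two D2 by blast
  have "b \<in> D1" using int D0 D1 ab by auto
  then obtain c where c: "D1 = {b,c}" "c \<noteq> b" "c \<noteq> a" using xy1 D1(2) by auto
  have "a \<in> D2" using int D0 D2 ab by auto
  then obtain c' where c': "D2 = {a,c'}" "c' \<noteq> a" "c' \<noteq> b" using xy2 D2(2) by auto
  have "c = c'" using int D1 D2 c c' ab by auto
  have "card {D0,D1,D2} \<le> 3" using card_length[of "[D0,D1,D2]"] by simp
  hence "\<not> S \<subseteq> {D0,D1,D2}" using c4 card_mono[of "{D0,D1,D2}" S] by auto
  then obtain D3 where D3: "D3 \<in> S" "D3 \<notin> {D0,D1,D2}" by blast
  obtain x y where xy: "x \<noteq> y" "D3 = {x,y}" using two D3 by blast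
  have i0: "D3 \<inter> {a,b} \<noteq> {}" and i1: "D3 \<inter> {b,c} \<noteq> {}" and i2: "D3 \<inter> {a,c} \<noteq> {}"
    using int D0 D1 D2 D3 ab c c' \<open>c = c'\<close> by auto
  have "D3 \<in> {{a,b},{b,c},{a,c}}" using i0 i1 i2 xy ab c by (auto simp: doubleton_eq_iff)
  thus False using D3 ab c c' \<open>c = c'\<close> by (auto simp: insert_commute)
qed

lemma aut_vtx_bold: assumes two: "(2::'a::field) \<noteq> 0" and aut: "\<phi> \<in> autNP"
  shows "\<exists>k l c. k \<in> {1..6} \<and> l \<in> {1..6} \<and> k \<noteq> l \<and> c \<noteq> 0 \<and> \<phi> (vtx A) = np_scale c (bold k l :: 'a np)"
  using aut_vtx_classify[OF two aut, of A]
proof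
  assume "\<exists>B t. t \<noteq> 0 \<and> \<phi> (vtx A) = np_scale t (vtx B)"
  then obtain B t where Bt: "t \<noteq> 0" "\<phi> (vtx A) = np_scale t (vtx B)" by blast
  obtain k l where kl: "k \<noteq> l" "k \<in> {1..5}" "l \<in> {1..5}" "B = V k l" using pvert_V by blast
  have "bold k l = (vtx B :: 'a np)" using kl bold_vtx by simp
  thus ?thesis using Bt kl by (intro exI[of _ k] exI[of _ l] exI[of _ t]) auto
next
  assume "\<exists>k\<in>{1..5}. \<exists>l. l \<noteq> 0 \<and> \<phi> (vtx A) = np_scale l (u_el k)"
  then obtain k t where kt: "k \<in> {1..5}" "t \<noteq> 0" "\<phi> (vtx A) = np_scale t (u_el k)" by blast
  have "bold k 6 = (u_el k :: 'a np)" using kt bold_u by simp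
  thus ?thesis using kt by (intro exI[of _ k] exI[of _ 6] exI[of _ t]) auto
qed

lemma bold_from_vtx: assumes two: "(2::'a::field) \<noteq> 0" and ij: "i \<in> {1..6}" "j \<in> {1..6}" "i \<noteq> j"
  shows "\<exists>\<psi> A. \<psi> \<in> autNP \<and> (bold i j :: 'a np) = \<psi> (vtx A)"
proof -
  have main: "\<exists>\<psi> A. \<psi> \<in> autNP \<and> (bold i 6 :: 'a np) = \<psi> (vtx A)" if i: "i \<in> {1..5}" for i
  proof -
    define x where "x = (if i = 1 then 2 else (1::nat))"
    have x: "x \<in> {1..5}" "x \<noteq> i" unfolding x_def using i by auto
    obtain \<psi> :: "'a np \<Rightarrow> 'a np" where "BP \<psi> (Transposition.transpose x 6)" using trans_BP[OF two, of x 6] x by auto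
    hence "\<psi> \<in> autNP" "\<psi> (bold i x) = bold (Transposition.transpose x 6 i) (Transposition.transpose x 6 x)"
      unfolding BP_def using x i by auto
    moreover have "Transposition.transpose x 6 i = i" using x i by auto
    moreover have "bold i x = (vtx (V i x) :: 'a np)" using x i bold_vtx by simp
    ultimately have e: "\<psi> (vtx (V i x)) = (bold i 6 :: 'a np)" by simp
    show ?thesis using \<open>\<psi> \<in> autNP\<close> e by (intro exI[of _ \<psi>] exI[of _ "V i x"]) simp
  qed
  consider "i \<in> {1..5}" "j \<in> {1..5}" | "i \<in> {1..5}" "j = 6" | "j \<in> {1..5}" "i = 6" using ij by fastforce
  then show ?thesis
  proof cases
    case 1 thus ?thesis using aut_id bold_vtx by (metis id_apply)
  next
    case 2 thus ?thesis using main by simp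
  next
    case 3 thus ?thesis using main bold_sym ij by metis
  qed
qed

lemma aut_bold: assumes two: "(2::'a::field) \<noteq> 0" and aut: "\<phi> \<in> autNP" and ij: "i \<in> {1..6}" "j \<in> {1..6}" "i \<noteq> j"
  shows "\<exists>k l c. k \<in> {1..6} \<and> l \<in> {1..6} \<and> k \<noteq> l \<and> c \<noteq> 0 \<and> \<phi> (bold i j) = np_scale c (bold k l :: 'a np)"
proof -
  obtain \<psi> A where "\<psi> \<in> autNP" "(bold i j :: 'a np) = \<psi> (vtx A)" using bold_from_vtx[OF two ij] by blast
  moreover have "\<phi> \<circ> \<psi> \<in> autNP" using aut calculation aut_comp by blast
  ultimately show ?thesis using aut_vtx_bold[OF two, of "\<phi> \<circ> \<psi>" A] by auto
qed

definition bD :: "nat set \<Rightarrow> 'a::field np" where "bD D = bold (Min D) (Max D)"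

lemma bD_pair: "k \<in> {1..6} \<Longrightarrow> l \<in> {1..6} \<Longrightarrow> k \<noteq> l \<Longrightarrow> bD {k,l} = bold k l"
  unfolding bD_def by (cases "k < l") (auto simp: bold_sym min_def max_def)

lemma FF_eq: "FF i = (\<lambda>j. span1 (bold i j)) ` ({1..6} - {i})"
  unfolding FF_def by auto

definition starS :: "nat \<Rightarrow> nat set set" where "starS k = (\<lambda>l. {k,l}) ` ({1..6} - {k})"

lemma FF_star: "k \<in> {1..6} \<Longrightarrow> FF k = (\<lambda>D. span1 (bD D)) ` starS k"
  unfolding FF_eq starS_def image_image by (auto simp: bD_pair)

lemma card_starS: "k \<in> {1..6} \<Longrightarrow> card (starS k) = 5"
proof -
  assume k: "k \<in> {1..6}"
  have "inj_on (\<lambda>l. {k,l}) ({1..6} - {k})" by (rule inj_onI) (auto simp: doubleton_eq_iff)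
  hence "card (starS k) = card ({1..6::nat} - {k})" unfolding starS_def by (rule card_image)
  also have "\<dots> = 5" using k by simp
  finally show ?thesis .
qed

lemma np_mult_scale: "np_mult (np_scale c x) (np_scale d y) = np_scale (c * d) (np_mult x y)"
  unfolding np_mult_def np_scale_def by (auto simp: fun_eq_iff sum_distrib_left[symmetric] algebra_simps)

lemma np_scale_npz: "(c::'a::field) \<noteq> 0 \<Longrightarrow> np_scale c z = npz \<Longrightarrow> z = npz"
  unfolding np_scale_def npz_def by (auto simp: fun_eq_iff prod_eq_iff)

lemma lines_FF: assumes two: "(2::'a::field) \<noteq> 0" and aut: "\<phi> \<in> (autNP :: ('a np \<Rightarrow> 'a np) set)" and i: "i \<in> {1..6}"
  shows "\<exists>k\<in>{1..6}. lines_img \<phi> (FF i) = FF k"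
proof -
  define J where "J = {1..6::nat} - {i}"
  have "\<forall>j\<in>J. \<exists>t. fst t \<in> {1..6} \<and> fst (snd t) \<in> {1..6} \<and> fst t \<noteq> fst (snd t) \<and> snd (snd t) \<noteq> 0
          \<and> \<phi> (bold i j) = np_scale (snd (snd t)) (bold (fst t) (fst (snd t)) :: 'a np)"
  proof
    fix j assume "j \<in> J"
    hence "j \<in> {1..6}" "i \<noteq> j" unfolding J_def by auto
    then obtain k l c where "k \<in> {1..6} \<and> l \<in> {1..6} \<and> k \<noteq> l \<and> c \<noteq> 0 \<and> \<phi> (bold i j) = np_scale c (bold k l :: 'a np)"
      using aut_bold[OF two aut i] by blast
    thus "\<exists>t. fst t \<in> {1..6} \<and> fst (snd t) \<in> {1..6} \<and> fst t \<noteq> fst (snd t) \<and> snd (snd t) \<noteq> 0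
          \<and> \<phi> (bold i j) = np_scale (snd (snd t)) (bold (fst t) (fst (snd t)) :: 'a np)"
      by (intro exI[of _ "(k,l,c)"]) simp
  qed
  from bchoice[OF this] obtain f where f: "\<forall>j\<in>J. fst (f j) \<in> {1..6} \<and> fst (snd (f j)) \<in> {1..6} \<and> fst (f j) \<noteq> fst (snd (f j)) \<and> snd (snd (f j)) \<noteq> 0
          \<and> \<phi> (bold i j) = np_scale (snd (snd (f j))) (bold (fst (f j)) (fst (snd (f j))) :: 'a np)"
    by blast
  define K where "K j = fst (f j)" for j
  define L where "L j = fst (snd (f j))" for j
  define C where "C j = snd (snd (f j))" for j
  have KL: "K j \<in> {1..6}" "L j \<in> {1..6}" "K j \<noteq> L j" "C j \<noteq> 0" "\<phi> (bold i j) = np_scale (C j) (bold (K j) (L j))"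
    if "j \<in> J" for j using f that unfolding K_def L_def C_def by auto
  define G where "G j = {K j, L j}" for j
  have GbD: "bD (G j) = (bold (K j) (L j) :: 'a np)" if "j \<in> J" for j unfolding G_def using KL[OF that] bD_pair by simp
  have Jprops: "j \<in> {1..6}" "i \<noteq> j" if "j \<in> J" for j using that unfolding J_def by auto
  have injG: "inj_on G J"
  proof (rule inj_onI)
    fix j j' assume jj: "j \<in> J" "j' \<in> J" "G j = G j'"
    hence "(bold (K j) (L j) :: 'a np) = bold (K j') (L j')" using GbD by metis
    hence "\<phi> (bold i j) = np_scale (C j / C j') (\<phi> (bold i j'))"
      using KL[OF jj(1)] KL[OF jj(2)] by (simp add: np_scale_scale)
    also have "\<dots> = \<phi> (np_scale (C j / C j') (bold i j'))" using aut_scale[OF aut] by simp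
    finally have "bold i j = np_scale (C j / C j') (bold i j' :: 'a np)" using aut_inj_eq[OF aut] by blast
    hence "{i,j} = {i,j'}" using F1[OF two] i Jprops[OF jj(1)] Jprops[OF jj(2)] by blast
    thus "j = j'" using Jprops[OF jj(1)] Jprops[OF jj(2)] by (auto simp: doubleton_eq_iff)
  qed
  define S where "S = G ` J"
  have cardS: "card S = 5" unfolding S_def using card_image[OF injG] i unfolding J_def by simp
  have finS: "finite S" unfolding S_def J_def by simp
  have twoS: "\<forall>D\<in>S. \<exists>a b. a \<noteq> b \<and> D = {a,b}" unfolding S_def G_def using KL by blast
  have intS: "\<forall>D\<in>S. \<forall>D'\<in>S. D \<inter> D' \<noteq> {}"
  proof (intro ballI)
    fix D D' assume "D \<in> S" "D' \<in> S"
    then obtain j j' where jj: "j \<in> J" "j' \<in> J" "D = G j" "D' = G j'" unfolding S_def by blast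
    show "D \<inter> D' \<noteq> {}"
    proof (cases "j = j'")
      case True thus ?thesis using jj unfolding G_def by auto
    next
      case False
      hence ne: "G j \<noteq> G j'" using injG jj inj_on_eq_iff by metis
      have "np_mult (bold i j) (bold i j') = (npz :: 'a np)"
        using F2[OF two i Jprops(1)[OF jj(1)] i Jprops(1)[OF jj(2)]] Jprops[OF jj(1)] Jprops[OF jj(2)] False
        by (auto simp: doubleton_eq_iff)
      hence "np_mult (\<phi> (bold i j)) (\<phi> (bold i j')) = npz" using aut_mult[OF aut] aut_zero[OF aut] by metis
      hence "np_scale (C j * C j') (np_mult (bold (K j) (L j)) (bold (K j') (L j'))) = (npz :: 'a np)"
        using KL[OF jj(1)] KL[OF jj(2)] by (simp add: np_mult_scale)
      hence "np_mult (bold (K j) (L j)) (bold (K j') (L j')) = (npz :: 'a np)"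
        using KL[OF jj(1)] KL[OF jj(2)] np_scale_npz by (metis no_zero_divisors)
      hence "{K j, L j} \<inter> {K j', L j'} \<noteq> {}"
        using F2[OF two KL(1,2)[OF jj(1)] KL(1,2)[OF jj(2)] KL(3)[OF jj(1)] KL(3)[OF jj(2)]] ne
        unfolding G_def by blast
      thus ?thesis using jj unfolding G_def by simp
    qed
  qed
  obtain k where k: "\<forall>D\<in>S. k \<in> D" using star[OF finS _ twoS intS] cardS by auto
  have sub6: "\<forall>D\<in>S. D \<subseteq> {1..6}" unfolding S_def G_def using KL by auto
  have "S \<noteq> {}" using cardS by auto
  hence k6: "k \<in> {1..6}" using k sub6 by blast
  have "S \<subseteq> starS k"
  proof
    fix D assume D: "D \<in> S"
    then obtain a b where ab: "a \<noteq> b" "D = {a,b}" using twoS by blast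
    have "k \<in> D" "D \<subseteq> {1..6}" using k sub6 D by auto
    then obtain l where "D = {k,l}" "l \<noteq> k" "l \<in> {1..6}" using ab by (auto simp: insert_commute)
    thus "D \<in> starS k" unfolding starS_def by auto
  qed
  hence SS: "S = starS k" using cardS card_starS[OF k6] by (intro card_subset_eq) (auto simp: starS_def)
  have "lines_img \<phi> (FF i) = (\<lambda>j. span1 (\<phi> (bold i j))) ` J"
    unfolding lines_img_def FF_eq J_def image_image using lin_span1[OF aut_lin[OF aut]] by simp
  also have "\<dots> = (\<lambda>j. span1 (bD (G j) :: 'a np)) ` J"
    by (rule image_cong) (simp_all add: KL GbD span1_scale)
  also have "\<dots> = (\<lambda>D. span1 (bD D)) ` S" unfolding S_def image_image ..
  also have "\<dots> = FF k" using SS FF_star[OF k6, where 'a='a] by simp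
  finally show ?thesis using k6 by blast
qed

definition lsum :: "'a::field np list \<Rightarrow> 'a np" where "lsum xs = foldr np_add xs npz"

lemma lsum_simps[simp]: "lsum [] = npz" "lsum (x # xs) = np_add x (lsum xs)"
  unfolding lsum_def by simp_all

lemma fst_lsum: "fst (lsum xs) B = sum_list (map (\<lambda>y. fst y B) xs)"
  by (induction xs) (simp_all add: npz_def np_add_def)
lemma snd_lsum: "snd (lsum xs) e = sum_list (map (\<lambda>y. snd y e) xs)"
  by (induction xs) (simp_all add: npz_def np_add_def)

lemma aut_lsum: "\<phi> \<in> autNP \<Longrightarrow> \<phi> (lsum xs) = lsum (map \<phi> xs)"
  by (induction xs) (simp_all add: aut_zero aut_add)

definition pvl :: "pvert list" where "pvl = (SOME xs. distinct xs \<and> set xs = UNIV)"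
lemma pvl: "distinct pvl" "set pvl = UNIV"
proof -
  obtain xs :: "pvert list" where "distinct xs \<and> set xs = UNIV" using finite_distinct_list[OF finite_pvert] by metis
  hence "distinct pvl \<and> set pvl = UNIV" unfolding pvl_def by (rule someI)
  thus "distinct pvl" "set pvl = UNIV" by auto
qed

definition pel :: "pedge list" where "pel = (SOME xs. distinct xs \<and> set xs = UNIV)"
lemma pel: "distinct pel" "set pel = UNIV"
proof -
  obtain xs :: "pedge list" where "distinct xs \<and> set xs = UNIV" using finite_distinct_list[OF finite_pedge] by metis
  hence "distinct pel \<and> set pel = UNIV" unfolding pel_def by (rule someI)
  thus "distinct pel" "set pel = UNIV" by auto
qed

definition edg :: "pedge \<Rightarrow> 'a::field np" where "edg e = (\<lambda>_. 0, \<lambda>f. if f = e then 1 else 0)"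

lemma fst_lsum_vtx: "fst (lsum (map (\<lambda>A. np_scale (g A) (vtx A :: 'a::field np)) pvl)) B = g B"
proof -
  have "fst (lsum (map (\<lambda>A. np_scale (g A) (vtx A :: 'a np)) pvl)) B = (\<Sum>A\<in>set pvl. g A * (if B = A then 1 else 0))"
    unfolding fst_lsum by (simp add: o_def np_scale_def vtx_def sum_list_distinct_conv_sum_set[OF pvl(1)])
  also have "\<dots> = g B" using pvl(2) by (simp add: if_distrib cong: if_cong)
  finally show ?thesis .
qed

lemma snd_lsum_vtx: "snd (lsum (map (\<lambda>A. np_scale (g A) (vtx A :: 'a::field np)) pvl)) e = 0"
  unfolding snd_lsum by (simp add: o_def np_scale_def vtx_def)

lemma U_decomp: "x \<in> U_P \<Longrightarrow> x = lsum (map (\<lambda>A. np_scale (fst x A) (vtx A :: 'a::field np)) pvl)"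
  by (rule prod_eqI) (auto simp: fun_eq_iff fst_lsum_vtx snd_lsum_vtx U_P_def)

lemma fst_lsum_edg: "fst (lsum (map (\<lambda>e. np_scale (g e) (edg e :: 'a::field np)) pel)) B = 0"
  unfolding fst_lsum by (simp add: o_def np_scale_def edg_def)

lemma snd_lsum_edg: "snd (lsum (map (\<lambda>e. np_scale (g e) (edg e :: 'a::field np)) pel)) f = g f"
proof -
  have "snd (lsum (map (\<lambda>e. np_scale (g e) (edg e :: 'a np)) pel)) f = (\<Sum>e\<in>set pel. g e * (if f = e then 1 else 0))"
    unfolding snd_lsum by (simp add: o_def np_scale_def edg_def sum_list_distinct_conv_sum_set[OF pel(1)])
  also have "\<dots> = g f" using pel(2) by (simp add: if_distrib cong: if_cong)
  finally show ?thesis .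
qed

lemma Z_decomp: "x \<in> Z_P \<Longrightarrow> x = lsum (map (\<lambda>e. np_scale (snd x e) (edg e :: 'a::field np)) pel)"
  by (rule prod_eqI) (auto simp: fun_eq_iff fst_lsum_edg snd_lsum_edg Z_P_def)

lemma edg_mult: assumes "Rep_pvert A \<inter> Rep_pvert B = {}"
  shows "np_mult (vtx A) (vtx B) = (edg (E A B) :: 'a::field np)"
proof -
  have "(A \<in> Rep_pedge f \<and> B \<in> Rep_pedge f) = (f = E A B)" for f
  proof
    assume h: "A \<in> Rep_pedge f \<and> B \<in> Rep_pedge f"
    obtain C D where CD: "Rep_pvert C \<inter> Rep_pvert D = {}" "f = E C D" using pedge_E by blast
    have "A \<noteq> B" using disj_neq[OF assms] .
    hence "{A,B} = {C,D}" using h RepE[OF CD(1)] CD(2) by auto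
    thus "f = E A B" using CD assms E_eq by metis
  next
    assume "f = E A B" thus "A \<in> Rep_pedge f \<and> B \<in> Rep_pedge f" using RepE[OF assms] by simp
  qed
  thus ?thesis unfolding np_mult_sv edg_def by (auto simp: fun_eq_iff sv_vtx)
qed

lemma scale_U: "x \<in> U_P \<Longrightarrow> scalar_aut \<alpha> x = np_scale \<alpha> x"
  unfolding scalar_aut_def np_scale_def U_P_def by auto

lemma bold_U: "i \<in> {1..6} \<Longrightarrow> j \<in> {1..6} \<Longrightarrow> bold i j \<in> U_P"
  unfolding bold_def U_P_def vtx_def u_el_def by auto

lemma line_inj: assumes two: "(2::'a::field) \<noteq> 0" and ij: "i \<in> {1..6}" "j \<in> {1..6}" "k \<in> {1..6}" "l \<in> {1..6}" "i \<noteq> j" "k \<noteq> l"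
  and eq: "span1 (bold i j :: 'a np) = span1 (bold k l)"
  shows "{i,j} = {k,l}"
  using span1_eq[OF eq] F1[OF two ij] by blast

lemma FF_mem: "i \<in> {1..6} \<Longrightarrow> j \<in> {1..6} \<Longrightarrow> i \<noteq> j \<Longrightarrow> span1 (bold i j) \<in> FF i"
  unfolding FF_def by auto

lemma FF_memD: "L \<in> FF i \<Longrightarrow> \<exists>k. k \<in> {1..6} \<and> k \<noteq> i \<and> L = span1 (bold i k)"
  unfolding FF_def by auto

lemma fix_line: assumes two: "(2::'a::field) \<noteq> 0" and aut: "\<phi> \<in> (autNP :: ('a np \<Rightarrow> 'a np) set)"
  and fx: "\<forall>k\<in>{1..6}. lines_img \<phi> (FF k) = FF k" and ij: "i \<in> {1..6}" "j \<in> {1..6}" "i \<noteq> j"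
  shows "\<exists>c. \<phi> (bold i j) = np_scale c (bold i j)"
proof -
  let ?L = "span1 (bold i j :: 'a np)"
  have "\<phi> ` ?L \<in> lines_img \<phi> (FF i)" unfolding lines_img_def using FF_mem[OF ij] by blast
  hence "\<phi> ` ?L \<in> FF i" using fx ij by simp
  then obtain k where k: "k \<in> {1..6}" "k \<noteq> i" "\<phi> ` ?L = span1 (bold i k)" using FF_memD by blast
  have "span1 (bold j i :: 'a np) \<in> FF j" using FF_mem[of j i] ij by simp
  hence "?L \<in> FF j" using bold_sym ij by metis
  hence "\<phi> ` ?L \<in> lines_img \<phi> (FF j)" unfolding lines_img_def by blast
  hence "\<phi> ` ?L \<in> FF j" using fx ij by simp
  then obtain l where l: "l \<in> {1..6}" "l \<noteq> j" "\<phi> ` ?L = span1 (bold j l)" using FF_memD by blast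
  have "{i,k} = {j,l}" using line_inj[OF two ij(1) k(1) ij(2) l(1)] k l ij by metis
  hence "k = j" using ij(3) by (auto simp: doubleton_eq_iff)
  hence "\<phi> ` ?L = ?L" using k by simp
  hence "\<phi> (bold i j) \<in> ?L" using span1_self by blast
  thus ?thesis unfolding span1_def by blast
qed

lemma kernel_scalar: assumes two: "(2::'a::field) \<noteq> 0" and aut: "\<phi> \<in> (autNP :: ('a np \<Rightarrow> 'a np) set)"
  and fx: "\<forall>k\<in>{1..6}. lines_img \<phi> (FF k) = FF k"
  shows "\<exists>\<alpha>. \<alpha> \<noteq> 0 \<and> \<phi> = scalar_aut \<alpha>"
proof -
  have "\<forall>A. \<exists>c. \<phi> (vtx A) = np_scale c (vtx A)"
  proof
    fix A
    obtain x y where xy: "x \<noteq> y" "x \<in> {1..5}" "y \<in> {1..5}" "A = V x y" using pvert_V by blast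
    have "bold x y = (vtx A :: 'a np)" using xy bold_vtx by simp
    moreover have "\<exists>c. \<phi> (bold x y) = np_scale c (bold x y)" using fix_line[OF two aut fx] xy by auto
    ultimately show "\<exists>c. \<phi> (vtx A) = np_scale c (vtx A)" by simp
  qed
  then obtain cf where cf: "\<And>A. \<phi> (vtx A) = np_scale (cf A) (vtx A)" by metis
  obtain d where d: "\<phi> (u_el 1) = np_scale d (u_el 1 :: 'a np)" using fix_line[OF two aut fx, of 1 6] bold_u(1)[of 1, where 'a='a] by auto
  have phiU: "\<phi> x = lsum (map (\<lambda>A. np_scale (fst x A * cf A) (vtx A)) pvl)" if "x \<in> U_P" for x
  proof -
    have "\<phi> x = \<phi> (lsum (map (\<lambda>A. np_scale (fst x A) (vtx A :: 'a np)) pvl))" using U_decomp[OF that] by metis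
    also have "\<dots> = lsum (map (\<lambda>A. np_scale (fst x A) (\<phi> (vtx A))) pvl)"
      by (simp add: aut_lsum[OF aut] aut_scale[OF aut] o_def)
    also have "\<dots> = lsum (map (\<lambda>A. np_scale (fst x A * cf A) (vtx A)) pvl)"
      by (simp add: cf np_scale_scale)
    finally show ?thesis .
  qed
  have uU: "u_el 1 \<in> (U_P :: 'a np set)" unfolding U_P_def u_el_def by simp
  have cfd: "cf B = d" for B
  proof -
    have "fst (\<phi> (u_el 1)) B = fst (u_el 1 :: 'a np) B * cf B" using phiU[OF uU] fst_lsum_vtx by simp
    moreover have "fst (\<phi> (u_el 1)) B = d * fst (u_el 1 :: 'a np) B" using d unfolding np_scale_def by simp
    moreover have "fst (u_el 1 :: 'a np) B \<noteq> 0" using two unfolding u_el_def by auto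
    ultimately show ?thesis by (simp add: mult.commute)
  qed
  have dnz: "d \<noteq> 0"
  proof
    assume "d = 0"
    hence "\<phi> (vtx A) = npz" for A using cf cfd np_scale_0 by metis
    thus False using aut_nz[OF aut] vtx_nz by metis
  qed
  have onU: "\<phi> x = scalar_aut d x" if "x \<in> U_P" for x
  proof (rule prod_eqI)
    show "fst (\<phi> x) = fst (scalar_aut d x)" using phiU[OF that] fst_lsum_vtx cfd
      unfolding scalar_aut_def by (auto simp: fun_eq_iff mult.commute)
    show "snd (\<phi> x) = snd (scalar_aut d x)" using phiU[OF that] snd_lsum_vtx that
      unfolding scalar_aut_def U_P_def by (auto simp: fun_eq_iff)
  qed
  have edgphi: "\<phi> (edg e) = np_scale (d * d) (edg e :: 'a np)" for e
  proof -
    obtain A B where AB: "Rep_pvert A \<inter> Rep_pvert B = {}" "e = E A B" using pedge_E by blast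
    have "\<phi> (edg e) = np_mult (\<phi> (vtx A)) (\<phi> (vtx B))" using edg_mult[OF AB(1), where 'a='a] AB(2) aut_mult[OF aut] by metis
    also have "\<dots> = np_scale (d * d) (edg e)" using cf cfd edg_mult[OF AB(1), where 'a='a] AB(2) by (simp add: np_mult_scale)
    finally show ?thesis .
  qed
  have onZ: "\<phi> x = scalar_aut d x" if "x \<in> Z_P" for x
  proof -
    have "\<phi> x = \<phi> (lsum (map (\<lambda>e. np_scale (snd x e) (edg e :: 'a np)) pel))" using Z_decomp[OF that] by metis
    also have "\<dots> = lsum (map (\<lambda>e. np_scale (snd x e * (d * d)) (edg e)) pel)"
      by (simp add: aut_lsum[OF aut] aut_scale[OF aut] o_def edgphi np_scale_scale)
    finally have e: "\<phi> x = lsum (map (\<lambda>e. np_scale (snd x e * (d * d)) (edg e)) pel)" .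
    show ?thesis
    proof (rule prod_eqI)
      show "fst (\<phi> x) = fst (scalar_aut d x)" using e fst_lsum_edg that
        unfolding scalar_aut_def Z_P_def by (auto simp: fun_eq_iff)
      show "snd (\<phi> x) = snd (scalar_aut d x)" using e snd_lsum_edg
        unfolding scalar_aut_def by (auto simp: fun_eq_iff power2_eq_square mult.commute)
    qed
  qed
  have "\<phi> x = scalar_aut d x" for x
  proof -
    have "x = np_add (fst x, \<lambda>_. 0) (\<lambda>_. 0, snd x)" unfolding np_add_def by simp
    hence "\<phi> x = np_add (\<phi> (fst x, \<lambda>_. 0)) (\<phi> (\<lambda>_. 0, snd x))" using aut_add[OF aut] by metis
    also have "\<dots> = np_add (scalar_aut d (fst x, \<lambda>_. 0)) (scalar_aut d (\<lambda>_. 0, snd x))"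
      using onU onZ unfolding U_P_def Z_P_def by simp
    also have "\<dots> = scalar_aut d x" unfolding np_add_def scalar_aut_def by simp
    finally show ?thesis .
  qed
  thus ?thesis using dnz by blast
qed

lemma FF_inj: assumes two: "(2::'a::field) \<noteq> 0" shows "inj_on (FF :: nat \<Rightarrow> 'a np set set) {1..6}"
proof (rule inj_onI, rule ccontr)
  fix i j assume ij: "i \<in> {1..6}" "j \<in> {1..6}" "(FF i :: 'a np set set) = FF j" "i \<noteq> j"
  have "card ({1..6::nat} - {i,j}) = 4" using ij by (simp add: card_Diff_subset)
  then obtain k where k: "k \<in> {1..6::nat} - {i,j}" by (metis card.empty ex_in_conv zero_neq_numeral)
  have "span1 (bold i k :: 'a np) \<in> FF j" using FF_mem[of i k] ij k by auto
  then obtain l where l: "l \<in> {1..6}" "l \<noteq> j" "span1 (bold i k :: 'a np) = span1 (bold j l)" using FF_memD by blast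
  have "{i,k} = {j,l}" using line_inj[OF two _ _ _ _ _ _ l(3)] ij k l by auto
  thus False using ij k by (auto simp: doubleton_eq_iff)
qed

lemma card_FFs: assumes two: "(2::'a::field) \<noteq> 0" shows "card (FFs :: 'a np set set set) = 6"
  unfolding FFs_def using card_image[OF FF_inj[OF two]] by simp

lemma lines_FFs: assumes two: "(2::'a::field) \<noteq> 0" and aut: "\<phi> \<in> (autNP :: ('a np \<Rightarrow> 'a np) set)" and S: "S \<in> FFs"
  shows "lines_img \<phi> S \<in> FFs"
proof -
  obtain i where i: "i \<in> {1..6}" "S = FF i" using S unfolding FFs_def by blast
  obtain k where "k \<in> {1..6}" "lines_img \<phi> (FF i) = FF k" using lines_FF[OF two aut i(1)] by blast
  thus ?thesis using i unfolding FFs_def by auto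
qed

lemma lines_img_comp: "lines_img \<phi> (lines_img \<psi> S) = lines_img (\<phi> \<circ> \<psi>) S"
  unfolding lines_img_def by (simp add: image_image image_comp)

lemma lines_img_id: "lines_img id S = S" unfolding lines_img_def by simp

lemma rho_Bij: assumes two: "(2::'a::field) \<noteq> 0" and aut: "\<phi> \<in> (autNP :: ('a np \<Rightarrow> 'a np) set)"
  shows "rhoF \<phi> \<in> Bij FFs"
proof -
  let ?f = "lines_img \<phi>" and ?g = "lines_img (inv_into UNIV \<phi>)"
  have ia: "inv_into UNIV \<phi> \<in> autNP" using aut_inv[OF aut] .
  have c1: "inv_into UNIV \<phi> \<circ> \<phi> = id" using aut_inv_l[OF aut] by (simp add: fun_eq_iff)
  have c2: "\<phi> \<circ> inv_into UNIV \<phi> = id" using aut_inv_r[OF aut] by (simp add: fun_eq_iff)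
  have "bij_betw ?f FFs FFs"
  proof (rule bij_betw_byWitness[where f' = ?g])
    show "\<forall>a\<in>FFs. ?g (?f a) = a" by (simp add: lines_img_comp c1 lines_img_id)
    show "\<forall>a\<in>FFs. ?f (?g a) = a" by (simp add: lines_img_comp c2 lines_img_id)
    show "?f ` FFs \<subseteq> FFs" using lines_FFs[OF two aut] by blast
    show "?g ` FFs \<subseteq> FFs" using lines_FFs[OF two ia] by blast
  qed
  hence "bij_betw (rhoF \<phi>) FFs FFs" unfolding rhoF_def by (rule bij_betw_cong[THEN iffD1, rotated]) simp
  thus ?thesis unfolding Bij_def rhoF_def by simp
qed

lemma rho_comp: assumes two: "(2::'a::field) \<noteq> 0" and aut: "\<phi> \<in> (autNP :: ('a np \<Rightarrow> 'a np) set)" "\<psi> \<in> autNP"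
  shows "rhoF (\<phi> \<circ> \<psi>) = compose FFs (rhoF \<phi>) (rhoF \<psi>)"
proof
  fix S show "rhoF (\<phi> \<circ> \<psi>) S = compose FFs (rhoF \<phi>) (rhoF \<psi>) S"
  proof (cases "S \<in> FFs")
    case True
    hence "lines_img \<psi> S \<in> FFs" using lines_FFs[OF two aut(2)] by blast
    thus ?thesis using True unfolding rhoF_def compose_def by (simp add: lines_img_comp)
  next
    case False thus ?thesis unfolding rhoF_def compose_def by simp
  qed
qed

lemma rho_hom: assumes two: "(2::'a::field) \<noteq> 0"
  shows "(rhoF :: ('a np \<Rightarrow> 'a np) \<Rightarrow> _) \<in> hom AutNP (BijGroup FFs)"
  unfolding hom_def
proof (intro CollectI conjI ballI)
  show "(rhoF :: ('a np \<Rightarrow> 'a np) \<Rightarrow> _) \<in> carrier AutNP \<rightarrow> carrier (BijGroup FFs)"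
    unfolding AutNP_def BijGroup_def using rho_Bij[OF two] by auto
  fix x y :: "'a np \<Rightarrow> 'a np" assume "x \<in> carrier AutNP" "y \<in> carrier AutNP"
  hence xy: "x \<in> autNP" "y \<in> autNP" unfolding AutNP_def by auto
  show "rhoF (x \<otimes>\<^bsub>AutNP\<^esub> y) = rhoF x \<otimes>\<^bsub>BijGroup FFs\<^esub> rhoF y"
    unfolding AutNP_def BijGroup_def using rho_Bij[OF two xy(1)] rho_Bij[OF two xy(2)] rho_comp[OF two xy]
    by simp
qed

lemma BP_FF: assumes "BP \<psi> q" "k \<in> {1..6}" shows "lines_img \<psi> (FF k) = FF (q k)"
proof -
  have aut: "\<psi> \<in> autNP" and q: "q permutes {1..6}" and b: "\<forall>i\<in>{1..6}. \<forall>j\<in>{1..6}. i \<noteq> j \<longrightarrow> \<psi> (bold i j) = bold (q i) (q j)"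
    using assms(1) unfolding BP_def by auto
  have qim: "q ` ({1..6} - {k}) = {1..6} - {q k}"
  proof -
    have "q ` ({1..6} - {k}) = q ` {1..6} - q ` {k}"
      by (rule inj_on_image_set_diff[OF permutes_inj_on[OF q]]) (use assms(2) in auto)
    thus ?thesis using permutes_image[OF q] by simp
  qed
  have "lines_img \<psi> (FF k) = (\<lambda>j. span1 (\<psi> (bold k j))) ` ({1..6} - {k})"
    unfolding lines_img_def FF_eq image_image using lin_span1[OF aut_lin[OF aut]] by simp
  also have "\<dots> = (\<lambda>j. span1 (bold (q k) (q j))) ` ({1..6} - {k})"
    using b assms(2) by (intro image_cong) auto
  also have "\<dots> = (\<lambda>j. span1 (bold (q k) j)) ` (q ` ({1..6} - {k}))" by (simp add: image_image)
  also have "\<dots> = FF (q k)" unfolding qim FF_eq ..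
  finally show ?thesis .
qed

lemma FF_transpose: assumes two: "(2::'a::field) \<noteq> 0" and ijk: "i \<in> {1..6}" "j \<in> {1..6}" "k \<in> {1..6}"
  shows "(FF (Transposition.transpose i j k) :: 'a np set set) = Transposition.transpose (FF i) (FF j) (FF k)"
proof -
  have inj: "inj_on (FF :: nat \<Rightarrow> 'a np set set) {1..6}" using FF_inj[OF two] .
  consider "k = i" | "k = j" | "k \<noteq> i" "k \<noteq> j" by blast
  thus ?thesis
  proof cases
    case 3
    have "(FF k :: 'a np set set) \<noteq> FF i"
    proof
      assume "(FF k :: 'a np set set) = FF i" hence "k = i" using inj_onD[OF inj] ijk by blast
      thus False using 3 by simp
    qed
    moreover have "(FF k :: 'a np set set) \<noteq> FF j"
    proof
      assume "(FF k :: 'a np set set) = FF j" hence "k = j" using inj_onD[OF inj] ijk by blast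
      thus False using 3 by simp
    qed
    ultimately show ?thesis using 3 by simp
  qed auto
qed

lemma rho_id: "rhoF id = restrict id FFs"
  unfolding rhoF_def by (rule restrict_ext) (simp add: lines_img_id)

lemma rho_surj: assumes two: "(2::'a::field) \<noteq> 0"
  shows "Bij (FFs :: 'a np set set set) \<subseteq> (rhoF :: ('a np \<Rightarrow> 'a np) \<Rightarrow> _) ` autNP"
proof
  fix g assume g: "g \<in> Bij (FFs :: 'a np set set set)"
  define p where "p S = (if S \<in> FFs then g S else S)" for S
  have bg: "bij_betw g FFs FFs" using g unfolding Bij_def by auto
  have "bij_betw p FFs FFs" using bg unfolding p_def by (rule bij_betw_cong[THEN iffD1, rotated]) simp
  hence pp: "p permutes FFs" by (rule bij_imp_permutes) (simp add: p_def)
  have fin: "finite (FFs :: 'a np set set set)" unfolding FFs_def by simp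
  have "restrict p FFs \<in> (rhoF :: ('a np \<Rightarrow> 'a np) \<Rightarrow> _) ` autNP"
    using pp fin
  proof (induction rule: permutes_induct)
    case id
    show ?case using rho_id aut_id by (metis image_eqI)
  next
    case (swap a b q)
    obtain \<phi> :: "'a np \<Rightarrow> 'a np" where phi0: "restrict q FFs = rhoF \<phi>" "\<phi> \<in> autNP"
      using \<open>restrict q FFs \<in> rhoF ` autNP\<close> by (rule imageE)
    hence phi: "\<phi> \<in> autNP" "rhoF \<phi> = restrict q FFs" by simp_all
    obtain i j where ij: "i \<in> {1..6}" "j \<in> {1..6}" "a = FF i" "b = FF j" using \<open>a \<in> FFs\<close> \<open>b \<in> FFs\<close> unfolding FFs_def by blast
    hence "i \<noteq> j" using \<open>a \<noteq> b\<close> by blast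
    then obtain \<psi> :: "'a np \<Rightarrow> 'a np" where psi: "BP \<psi> (Transposition.transpose i j)" using trans_BP[OF two ij(1,2)] by blast
    have paut: "\<psi> \<in> autNP" using psi unfolding BP_def by blast
    have "rhoF (\<psi> \<circ> \<phi>) = restrict (Transposition.transpose a b \<circ> q) FFs"
    proof
      fix S show "rhoF (\<psi> \<circ> \<phi>) S = restrict (Transposition.transpose a b \<circ> q) FFs S"
      proof (cases "S \<in> FFs")
        case True
        hence qS: "q S \<in> FFs" using \<open>q permutes FFs\<close> permutes_in_image by metis
        then obtain k where k: "k \<in> {1..6}" "q S = FF k" unfolding FFs_def by blast
        have "rhoF (\<psi> \<circ> \<phi>) S = rhoF \<psi> (rhoF \<phi> S)" using rho_comp[OF two paut phi(1)] True by (simp add: compose_def)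
        also have "\<dots> = lines_img \<psi> (FF k)" using phi(2) True qS k unfolding rhoF_def by simp
        also have "\<dots> = FF (Transposition.transpose i j k)" using BP_FF[OF psi k(1)] .
        also have "\<dots> = Transposition.transpose a b (q S)" using FF_transpose[OF two ij(1,2) k(1)] ij k by simp
        finally show ?thesis using True by simp
      next
        case False thus ?thesis unfolding rhoF_def by simp
      qed
    qed
    moreover have "\<psi> \<circ> \<phi> \<in> autNP" using aut_comp[OF paut phi(1)] .
    ultimately show ?case by (metis image_eqI)
  qed
  moreover have "restrict p FFs = g"
  proof -
    have "restrict p FFs = restrict g FFs" unfolding p_def by (rule restrict_ext) simp
    also have "\<dots> = g" using g unfolding Bij_def by (simp add: extensional_restrict)
    finally show ?thesis .
  qed
  ultimately show "g \<in> (rhoF :: ('a np \<Rightarrow> 'a np) \<Rightarrow> _) ` autNP" by simp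
qed

lemma scalar_lines: assumes "\<alpha> \<noteq> (0::'a::field)" "k \<in> {1..6}"
  shows "lines_img (scalar_aut \<alpha>) (FF k :: 'a np set set) = FF k"
proof -
  have aut: "scalar_aut \<alpha> \<in> (autNP :: ('a np \<Rightarrow> 'a np) set)" using scalar_aut_in[OF assms(1)] .
  have "lines_img (scalar_aut \<alpha>) (FF k :: 'a np set set) = (\<lambda>j. span1 (scalar_aut \<alpha> (bold k j :: 'a np))) ` ({1..6} - {k})"
    unfolding lines_img_def FF_eq image_image using lin_span1[OF aut_lin[OF aut]] by simp
  also have "\<dots> = (\<lambda>j. span1 (bold k j :: 'a np)) ` ({1..6} - {k})"
  proof (rule image_cong)
    fix j assume "j \<in> {1..6} - {k}"
    hence "bold k j \<in> (U_P :: 'a np set)" using assms(2) bold_U[of k j, where 'a='a] by simp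
    hence "scalar_aut \<alpha> (bold k j :: 'a np) = np_scale \<alpha> (bold k j)" by (rule scale_U)
    thus "span1 (scalar_aut \<alpha> (bold k j :: 'a np)) = span1 (bold k j)" using span1_scale[OF assms(1), of "bold k j :: 'a np"] by simp
  qed simp
  finally show ?thesis unfolding FF_eq .
qed

lemma kernel_eq: assumes two: "(2::'a::field) \<noteq> 0"
  shows "kernel AutNP (BijGroup FFs) (rhoF :: ('a np \<Rightarrow> 'a np) \<Rightarrow> _) = scalar_auts"
proof
  show "kernel AutNP (BijGroup FFs) (rhoF :: ('a np \<Rightarrow> 'a np) \<Rightarrow> _) \<subseteq> scalar_auts"
  proof
    fix \<phi> :: "'a np \<Rightarrow> 'a np" assume "\<phi> \<in> kernel AutNP (BijGroup FFs) rhoF"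
    hence aut: "\<phi> \<in> autNP" and r: "rhoF \<phi> = (\<lambda>x\<in>FFs. x)" unfolding kernel_def AutNP_def BijGroup_def by auto
    have "\<forall>k\<in>{1..6}. lines_img \<phi> (FF k) = FF k"
    proof
      fix k :: nat assume k: "k \<in> {1..6}"
      hence "FF k \<in> (FFs :: 'a np set set set)" unfolding FFs_def by blast
      thus "lines_img \<phi> (FF k) = FF k" using fun_cong[OF r, of "FF k"] unfolding rhoF_def by simp
    qed
    then obtain \<alpha> where "\<alpha> \<noteq> 0" "\<phi> = scalar_aut \<alpha>" using kernel_scalar[OF two aut] by blast
    thus "\<phi> \<in> scalar_auts" unfolding scalar_auts_def by blast
  qed
  show "scalar_auts \<subseteq> kernel AutNP (BijGroup FFs) (rhoF :: ('a np \<Rightarrow> 'a np) \<Rightarrow> _)"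
  proof
    fix \<phi> :: "'a np \<Rightarrow> 'a np" assume "\<phi> \<in> scalar_auts"
    then obtain \<alpha> where a: "\<alpha> \<noteq> 0" "\<phi> = scalar_aut \<alpha>" unfolding scalar_auts_def by blast
    have aut: "\<phi> \<in> autNP" using scalar_aut_in a by simp
    have "rhoF \<phi> = (\<lambda>x\<in>FFs. x)"
    proof
      fix S show "rhoF \<phi> S = (\<lambda>x\<in>FFs. x) S"
      proof (cases "S \<in> FFs")
        case True
        then obtain k where "k \<in> {1..6}" "S = FF k" unfolding FFs_def by blast
        thus ?thesis using scalar_lines[OF a(1)] a(2) True unfolding rhoF_def by simp
      next
        case False thus ?thesis unfolding rhoF_def by simp
      qed
    qed
    thus "\<phi> \<in> kernel AutNP (BijGroup FFs) rhoF" using aut unfolding kernel_def AutNP_def BijGroup_def by simp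
  qed
qed

theorem theorem10p4:
  assumes char2: "(2::'a::field) \<noteq> 0"
  shows "card (FFs :: 'a np set set set) = 6
    \<and> (\<forall>\<phi>\<in>(autNP :: ('a np \<Rightarrow> 'a np) set). \<forall>S\<in>FFs. lines_img \<phi> S \<in> FFs)
    \<and> (rhoF :: ('a np \<Rightarrow> 'a np) \<Rightarrow> _) \<in> hom AutNP (BijGroup FFs)
    \<and> (rhoF :: ('a np \<Rightarrow> 'a np) \<Rightarrow> _) ` autNP = carrier (BijGroup FFs)
    \<and> kernel AutNP (BijGroup FFs) (rhoF :: ('a np \<Rightarrow> 'a np) \<Rightarrow> _) = scalar_auts"
proof (intro conjI)
  show "card (FFs :: 'a np set set set) = 6" using card_FFs[OF char2] .
  show "\<forall>\<phi>\<in>(autNP :: ('a np \<Rightarrow> 'a np) set). \<forall>S\<in>FFs. lines_img \<phi> S \<in> FFs" using lines_FFs[OF char2] by blast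
  show "(rhoF :: ('a np \<Rightarrow> 'a np) \<Rightarrow> _) \<in> hom AutNP (BijGroup FFs)" using rho_hom[OF char2] .
  show "(rhoF :: ('a np \<Rightarrow> 'a np) \<Rightarrow> _) ` autNP = carrier (BijGroup FFs)"
  proof
    show "(rhoF :: ('a np \<Rightarrow> 'a np) \<Rightarrow> _) ` autNP \<subseteq> carrier (BijGroup FFs)"
      using rho_Bij[OF char2] unfolding BijGroup_def by auto
    show "carrier (BijGroup FFs) \<subseteq> (rhoF :: ('a np \<Rightarrow> 'a np) \<Rightarrow> _) ` autNP"
      using rho_surj[OF char2] unfolding BijGroup_def by simp
  qed
  show "kernel AutNP (BijGroup FFs) (rhoF :: ('a np \<Rightarrow> 'a np) \<Rightarrow> _) = scalar_auts" using kernel_eq[OF char2] .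
qed

end
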